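(* Let $T$ be a simplex in $\mathbb{E}^3$ whose four facets can be partitioned into two pairs $\{F_1,F_2\}$, $\{F_3,F_4\}$ with $\mathrm{area}(F_1)=\mathrm{area}(F_2)\neq\mathrm{area}(F_3)=\mathrm{area}(F_4)$. Then there are at most $28$ isolated local extrema (direction vectors $v$, $v^2=1$) of the squared radius of a circumscribing cylinder of $T$; in this case the cubic $g_1$ factors into a linear and an irreducible quadratic factor, and the local extrema can be computed from two polynomial systems with Bézout numbers $20$ and $8$, respectively.
   Context: Place a vertex of $T$ at the origin, let $p_1,p_2,p_3$ be the other vertices, $M=(p_1,p_2,p_3)^T$, $w(v)=(v^2p_i^2-(v\cdot p_i)^2)_{i=1,2,3}$, $U(v)=\frac12M^{-1}w(v)$, $f(v)=U(v)\cdot U(v)$ (squared radius), $g_1(v)=U(v)\cdot v$ (homogeneous cubic), $g_2(v)=v^2-1$. Circumscribing cylinders of $T$ (cylinders, i.e. sets of points at fixed distance $\rho>0$ from a line, containing all vertices of $T$) correspond to directions $v$ with $g_1(v)=0$, $g_2(v)=0$, with squared radius $f(v)$; a local extremum means a local extremum of $f$ on $\{g_1=g_2=0\}$. *)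

theory Defs
  imports "HOL-Analysis.Analysis"
begin

text \<open>A simplex T in E^3 with one vertex at the origin and other vertices p1 p2 p3.\<close>

definition cyl_M :: "real^3 \<Rightarrow> real^3 \<Rightarrow> real^3 \<Rightarrow> real^3^3" where
  "cyl_M p1 p2 p3 = vector [p1, p2, p3]"

definition cyl_w :: "real^3 \<Rightarrow> real^3 \<Rightarrow> real^3 \<Rightarrow> real^3 \<Rightarrow> real^3" where
  "cyl_w p1 p2 p3 v = vector
     [ (v \<bullet> v) * (p1 \<bullet> p1) - (v \<bullet> p1)^2,
       (v \<bullet> v) * (p2 \<bullet> p2) - (v \<bullet> p2)^2,
       (v \<bullet> v) * (p3 \<bullet> p3) - (v \<bullet> p3)^2 ]"

definition cyl_U :: "real^3 \<Rightarrow> real^3 \<Rightarrow> real^3 \<Rightarrow> real^3 \<Rightarrow> real^3" where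
  "cyl_U p1 p2 p3 v = (1/2) *\<^sub>R (matrix_inv (cyl_M p1 p2 p3) *v cyl_w p1 p2 p3 v)"

definition cyl_f :: "real^3 \<Rightarrow> real^3 \<Rightarrow> real^3 \<Rightarrow> real^3 \<Rightarrow> real" where
  "cyl_f p1 p2 p3 v = cyl_U p1 p2 p3 v \<bullet> cyl_U p1 p2 p3 v"

definition cyl_g1 :: "real^3 \<Rightarrow> real^3 \<Rightarrow> real^3 \<Rightarrow> real^3 \<Rightarrow> real" where
  "cyl_g1 p1 p2 p3 v = cyl_U p1 p2 p3 v \<bullet> v"

definition cyl_g2 :: "real^3 \<Rightarrow> real" where
  "cyl_g2 v = v \<bullet> v - 1"

definition cyl_dirs :: "real^3 \<Rightarrow> real^3 \<Rightarrow> real^3 \<Rightarrow> (real^3) set" where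
  "cyl_dirs p1 p2 p3 = {v. cyl_g1 p1 p2 p3 v = 0 \<and> cyl_g2 v = 0}"

definition cyl_local_extremum :: "real^3 \<Rightarrow> real^3 \<Rightarrow> real^3 \<Rightarrow> real^3 \<Rightarrow> bool" where
  "cyl_local_extremum p1 p2 p3 v \<longleftrightarrow> v \<in> cyl_dirs p1 p2 p3 \<and>
     (\<exists>e>0. (\<forall>u \<in> cyl_dirs p1 p2 p3. dist u v < e \<longrightarrow> cyl_f p1 p2 p3 u \<le> cyl_f p1 p2 p3 v) \<or>
            (\<forall>u \<in> cyl_dirs p1 p2 p3. dist u v < e \<longrightarrow> cyl_f p1 p2 p3 v \<le> cyl_f p1 p2 p3 u))"

definition cyl_isolated_local_extremum :: "real^3 \<Rightarrow> real^3 \<Rightarrow> real^3 \<Rightarrow> real^3 \<Rightarrow> bool" where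
  "cyl_isolated_local_extremum p1 p2 p3 v \<longleftrightarrow> cyl_local_extremum p1 p2 p3 v \<and>
     (\<exists>e>0. \<forall>u. cyl_local_extremum p1 p2 p3 u \<and> dist u v < e \<longrightarrow> u = v)"

text \<open>Facet areas: facet i is opposite vertex p_i (p_0 = 0).\<close>
definition facet_area :: "real^3 \<Rightarrow> real^3 \<Rightarrow> real^3 \<Rightarrow> nat \<Rightarrow> real" where
  "facet_area p1 p2 p3 i =
     (if i = 0 then norm (cross3 (p2 - p1) (p3 - p1)) / 2
      else if i = 1 then norm (cross3 p2 p3) / 2
      else if i = 2 then norm (cross3 p1 p3) / 2
      else norm (cross3 p1 p2) / 2)"

definition linear_form :: "(real^3 \<Rightarrow> real) \<Rightarrow> bool" where
  "linear_form l \<longleftrightarrow> (\<exists>a. a \<noteq> 0 \<and> (\<forall>v. l v = a \<bullet> v))"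

definition quadratic_form :: "(real^3 \<Rightarrow> real) \<Rightarrow> bool" where
  "quadratic_form q \<longleftrightarrow> (\<exists>A::real^3^3. \<forall>v. q v = v \<bullet> (A *v v))"

definition irreducible_quadratic_form :: "(real^3 \<Rightarrow> real) \<Rightarrow> bool" where
  "irreducible_quadratic_form q \<longleftrightarrow> quadratic_form q \<and> (\<exists>v. q v \<noteq> 0) \<and>
     \<not> (\<exists>a b :: real^3. \<forall>v. q v = (a \<bullet> v) * (b \<bullet> v))"

end

theory Submission
  imports Defs "HOL-Computational_Algebra.Polynomial"
begin

unbundle cross3_syntax


lemmas v3simps = cross3_simps forall_3

definition trip :: "real^3 \<Rightarrow> real^3 \<Rightarrow> real^3 \<Rightarrow> real" where
  "trip x y z = x \<bullet> (y \<times> z)"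

definition ww :: "real^3 \<Rightarrow> real^3 \<Rightarrow> real" where
  "ww p v = (v \<bullet> v) * (p \<bullet> p) - (v \<bullet> p)^2"

lemma det_M_trip: "det (cyl_M p1 p2 p3) = trip p1 p2 p3"
  unfolding cyl_M_def trip_def by (simp add: dot_cross_det)

lemma cramer3:
  fixes p1 p2 p3 x :: "real^3"
  shows "trip p1 p2 p3 *\<^sub>R x = (p1 \<bullet> x) *\<^sub>R (p2 \<times> p3) + (p2 \<bullet> x) *\<^sub>R (p3 \<times> p1) + (p3 \<bullet> x) *\<^sub>R (p1 \<times> p2)"
  unfolding trip_def by (simp add: v3simps)

lemma cramer3b:
  fixes p1 p2 p3 x :: "real^3"
  shows "trip p1 p2 p3 *\<^sub>R x = trip x p2 p3 *\<^sub>R p1 + trip p1 x p3 *\<^sub>R p2 + trip p1 p2 x *\<^sub>R p3"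
  unfolding trip_def by (simp add: vec_eq_iff forall_3 cross3_def inner_vec_def sum_3 vector_def; algebra)

lemma M_mult: "cyl_M p1 p2 p3 *v x = vector [p1 \<bullet> x, p2 \<bullet> x, p3 \<bullet> x]"
  unfolding cyl_M_def by (simp add: vec_eq_iff matrix_vector_mult_def inner_vec_def sum_3 vector_def forall_3)

lemma U_char:
  assumes "det (cyl_M p1 p2 p3) \<noteq> 0"
  shows "cyl_M p1 p2 p3 *v cyl_U p1 p2 p3 v = (1/2) *\<^sub>R cyl_w p1 p2 p3 v"
proof -
  let ?M = "cyl_M p1 p2 p3"
  have inv: "invertible ?M" using assms invertible_det_nz by blast
  then have "?M ** matrix_inv ?M = mat 1"
    unfolding matrix_inv_def invertible_def by (rule someI_ex[where P="\<lambda>A'. ?M ** A' = mat 1 \<and> A' ** ?M = mat 1", THEN conjunct1])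
  then show ?thesis unfolding cyl_U_def
    by (simp add: matrix_vector_mult_scaleR matrix_vector_mul_assoc)
qed

lemma U_dots:
  assumes "det (cyl_M p1 p2 p3) \<noteq> 0"
  shows "p1 \<bullet> cyl_U p1 p2 p3 v = ww p1 v / 2" "p2 \<bullet> cyl_U p1 p2 p3 v = ww p2 v / 2"
    "p3 \<bullet> cyl_U p1 p2 p3 v = ww p3 v / 2"
  using U_char[OF assms, of v] unfolding M_mult cyl_w_def ww_def
  by (auto simp: vec_eq_iff forall_3 vector_def inner_commute)

lemma U_formula:
  assumes "det (cyl_M p1 p2 p3) \<noteq> 0"
  shows "cyl_U p1 p2 p3 v = (1 / (2 * trip p1 p2 p3)) *\<^sub>R
     (ww p1 v *\<^sub>R (p2 \<times> p3) + ww p2 v *\<^sub>R (p3 \<times> p1) + ww p3 v *\<^sub>R (p1 \<times> p2))"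
proof -
  have D: "trip p1 p2 p3 \<noteq> 0" using assms det_M_trip by simp
  have "trip p1 p2 p3 *\<^sub>R cyl_U p1 p2 p3 v = (1/2) *\<^sub>R (ww p1 v *\<^sub>R (p2 \<times> p3) + ww p2 v *\<^sub>R (p3 \<times> p1) + ww p3 v *\<^sub>R (p1 \<times> p2))"
    unfolding cramer3 U_dots[OF assms] by (simp add: algebra_simps)
  then have "cyl_U p1 p2 p3 v = (1 / trip p1 p2 p3) *\<^sub>R ((1/2) *\<^sub>R (ww p1 v *\<^sub>R (p2 \<times> p3) + ww p2 v *\<^sub>R (p3 \<times> p1) + ww p3 v *\<^sub>R (p1 \<times> p2)))"
    using D by (metis (no_types, lifting) scaleR_scaleR nonzero_divide_eq_eq mult.commute scaleR_one divide_self_if times_divide_eq_left) 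
  then show ?thesis using D by (simp add: scaleR_scaleR)
qed

lemma g1_formula:
  assumes "det (cyl_M p1 p2 p3) \<noteq> 0"
  shows "cyl_g1 p1 p2 p3 v = (ww p1 v * trip v p2 p3 + ww p2 v * trip p1 v p3 + ww p3 v * trip p1 p2 v) / (2 * trip p1 p2 p3)"
proof -
  have t: "(p2 \<times> p3) \<bullet> v = trip v p2 p3" "(p3 \<times> p1) \<bullet> v = trip p1 v p3" "(p1 \<times> p2) \<bullet> v = trip p1 p2 v"
    unfolding trip_def by (simp_all add: v3simps)
  show ?thesis unfolding cyl_g1_def U_formula[OF assms]
    by (simp add: inner_add_left t)
qed


definition cv :: "(3 \<Rightarrow> real poly) \<Rightarrow> real \<Rightarrow> real^3" where
  "cv c s = (\<chi> i. poly (c i) s)"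

definition pf :: "nat \<Rightarrow> (real^3 \<Rightarrow> real) \<Rightarrow> bool" where
  "pf d h \<longleftrightarrow> (\<forall>c k. (\<forall>i. degree (c i) \<le> k) \<longrightarrow> (\<exists>P. degree P \<le> d*k \<and> (\<forall>s. poly P s = h (cv c s))))"

lemma pf_const: "pf 0 (\<lambda>v. r)"
  unfolding pf_def by (intro allI impI exI[of _ "[:r:]"]) auto

lemma pf_comp: "pf 1 (\<lambda>v. v $ i)"
  unfolding pf_def cv_def by (intro allI impI, rule_tac x="c i" in exI) auto

lemma pf_add: "pf d h1 \<Longrightarrow> pf d h2 \<Longrightarrow> pf d (\<lambda>v. h1 v + h2 v)"
  unfolding pf_def
  apply (intro allI impI)
  subgoal for c k
    apply (elim allE[of _ c] allE[of _ k])
    apply clarify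
    subgoal for P1 P2 by (rule exI[of _ "P1 + P2"]) (auto intro: degree_add_le)
    done
  done

lemma pf_diff: "pf d h1 \<Longrightarrow> pf d h2 \<Longrightarrow> pf d (\<lambda>v. h1 v - h2 v)"
  unfolding pf_def
  apply (intro allI impI)
  subgoal for c k
    apply (elim allE[of _ c] allE[of _ k])
    apply clarify
    subgoal for P1 P2 by (rule exI[of _ "P1 - P2"]) (auto intro: degree_diff_le)
    done
  done

lemma pf_mult: "pf d1 h1 \<Longrightarrow> pf d2 h2 \<Longrightarrow> d1 + d2 \<le> d \<Longrightarrow> pf d (\<lambda>v. h1 v * h2 v)"
  unfolding pf_def
  apply (intro allI impI)
  subgoal for c k
    apply (elim allE[of _ c] allE[of _ k])
    apply clarify
    subgoal for P1 P2
      apply (rule exI[of _ "P1 * P2"])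
      apply (auto)
      apply (rule order.trans[OF degree_mult_le])
      apply (rule order.trans[of _ "d1*k + d2*k"])
       apply simp
      by (metis add_mult_distrib mult_le_mono1)
    done
  done

lemma pf_scale: "pf d h \<Longrightarrow> pf d (\<lambda>v. r * h v)"
  by (drule pf_mult[OF pf_const, of d h d r]) auto

lemma pf_mono: "pf d h \<Longrightarrow> d \<le> d' \<Longrightarrow> pf d' h"
  unfolding pf_def by (meson le_trans mult_le_mono1)

lemma pf_inner: "pf 1 (\<lambda>v. b \<bullet> v)"
proof -
  have e: "(\<lambda>v::real^3. b \<bullet> v) = (\<lambda>v::real^3. (b$1 * v$1 + b$2 * v$2) + b$3 * v$3)"
    by (simp add: inner_vec_def sum_3)
  show ?thesis unfolding e
    by (intro pf_add pf_scale pf_comp)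
qed

lemma pf_self: "pf 2 (\<lambda>v. v \<bullet> v)"
proof -
  have e: "(\<lambda>v::real^3. v \<bullet> v) = (\<lambda>v::real^3. (v$1 * v$1 + v$2 * v$2) + v$3 * v$3)"
    by (simp add: inner_vec_def sum_3)
  show ?thesis unfolding e
    by (intro pf_add pf_mult[OF pf_comp pf_comp]) auto
qed

lemma pf_ww: "pf 2 (ww p)"
proof -
  have e: "ww p = (\<lambda>v. (p \<bullet> p) * (v \<bullet> v) - (p \<bullet> v) * (p \<bullet> v))"
    by (auto simp: ww_def power2_eq_square inner_commute)
  show ?thesis unfolding e
    by (intro pf_diff pf_scale pf_self pf_mult[OF pf_inner pf_inner]) auto
qed

lemma ww_hom: "ww p (t *\<^sub>R v) = t^2 * ww p v"
  unfolding ww_def by (simp add: algebra_simps power2_eq_square)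

lemma f_expand:
  assumes "det (cyl_M p1 p2 p3) \<noteq> 0"
  shows "cyl_f p1 p2 p3 v = (1 / (2 * trip p1 p2 p3))^2 *
    (ww p1 v * ww p1 v * ((p2 \<times> p3) \<bullet> (p2 \<times> p3)) + ww p2 v * ww p2 v * ((p3 \<times> p1) \<bullet> (p3 \<times> p1))
     + ww p3 v * ww p3 v * ((p1 \<times> p2) \<bullet> (p1 \<times> p2)) + 2 * (ww p1 v * ww p2 v) * ((p2 \<times> p3) \<bullet> (p3 \<times> p1))
     + 2 * (ww p1 v * ww p3 v) * ((p2 \<times> p3) \<bullet> (p1 \<times> p2)) + 2 * (ww p2 v * ww p3 v) * ((p3 \<times> p1) \<bullet> (p1 \<times> p2)))"
  unfolding cyl_f_def U_formula[OF assms]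
  by (simp add: inner_add_left inner_add_right inner_commute power2_eq_square algebra_simps)

lemma pf_f:
  assumes "det (cyl_M p1 p2 p3) \<noteq> 0"
  shows "pf 4 (cyl_f p1 p2 p3)"
  unfolding f_expand[OF assms, abs_def]
  by (intro pf_scale pf_add pf_mult[OF pf_mult[OF pf_ww pf_ww order.refl] pf_const] 
       pf_mult[OF pf_scale[OF pf_mult[OF pf_ww pf_ww order.refl]] pf_const]) auto

lemma f_hom:
  assumes "det (cyl_M p1 p2 p3) \<noteq> 0"
  shows "cyl_f p1 p2 p3 (t *\<^sub>R v) = t^4 * cyl_f p1 p2 p3 v"
  unfolding f_expand[OF assms] ww_hom by (simp add: algebra_simps power2_eq_square power4_eq_xxxx)

lemma f_cont:
  assumes "det (cyl_M p1 p2 p3) \<noteq> 0"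
  shows "continuous_on UNIV (cyl_f p1 p2 p3)"
  unfolding f_expand[OF assms, abs_def] ww_def
  by (intro continuous_intros)


lemma trip_cyc: "trip p2 p3 p1 = trip p1 p2 p3" "trip p3 p1 p2 = trip p1 p2 p3"
  unfolding trip_def by (simp_all add: v3simps)
lemma trip_rep: "trip x y y = 0" "trip x y x = 0" "trip x x y = 0"
  unfolding trip_def by (simp_all add: dot_cross_self)
lemma ccd: "(w \<times> x) \<times> (y \<times> z) = trip w x z *\<^sub>R y - trip w x y *\<^sub>R z"
  unfolding trip_def dot_cross_det by (rule cross_cross_det)
lemma cc1: "(p1 \<times> p2) \<times> (p2 \<times> p3) = trip p1 p2 p3 *\<^sub>R p2"
  unfolding ccd by (simp add: trip_rep)
lemma cc2: "(p3 \<times> p1) \<times> ((p2 \<times> p3) + (p1 \<times> p2)) = trip p1 p2 p3 *\<^sub>R (p1 - p3)"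
  unfolding cross_add_right ccd by (simp add: trip_rep trip_cyc algebra_simps)
lemma cc3: "(p2 \<times> p3) \<times> (p3 \<times> p1) = trip p1 p2 p3 *\<^sub>R p3"
  unfolding ccd by (simp add: trip_rep trip_cyc)
lemma cc4: "(p1 \<times> p2) \<times> ((p2 \<times> p3) + (p3 \<times> p1)) = trip p1 p2 p3 *\<^sub>R (p2 - p1)"
  unfolding cross_add_right ccd by (simp add: trip_rep trip_cyc algebra_simps)
lemma cc0: "(p2 - p1) \<times> (p3 - p1) = (p2 \<times> p3) + (p3 \<times> p1) + (p1 \<times> p2)"
  by (simp add: v3simps)
lemma cc5: "p1 \<times> p3 = - (p3 \<times> p1)"
  by (simp add: v3simps)

lemma norm_eq_inner: "norm (x::'a::real_inner) = norm y \<longleftrightarrow> x \<bullet> x = y \<bullet> y"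
  by (metis norm_eq_sqrt_inner real_sqrt_eq_iff)

lemma dot_alg1:
  fixes xx yy zz xy yz zx :: real
  assumes "yy + zz + 2*xy + 2*yz + 2*zx = 0" "yy = zz"
  shows "zz*xx - zx^2 = yy*(xx + 2*zx + zz) - (xy + yz)^2"
    "xx*yy - xy^2 = zz*(xx + 2*xy + yy) - (zx + yz)^2"
  using assms by algebra+

lemma rel_from_areas:
  fixes p1 p2 p3 :: "real^3"
  assumes D: "trip p1 p2 p3 \<noteq> 0"
    and h1: "norm ((p2 - p1) \<times> (p3 - p1)) = norm (p2 \<times> p3)"
    and h2: "norm (p1 \<times> p3) = norm (p1 \<times> p2)"
  shows "p1 \<bullet> p1 = p1 \<bullet> p2 + p1 \<bullet> p3" "p2 \<bullet> p2 = p3 \<bullet> p3 + p1 \<bullet> p2 - p1 \<bullet> p3"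
proof -
  define X where "X = p2 \<times> p3"
  define Y where "Y = p3 \<times> p1"
  define Z where "Z = p1 \<times> p2"
  define d where "d = trip p1 p2 p3"
  have H1: "(X+Y+Z) \<bullet> (X+Y+Z) = X \<bullet> X" using h1 unfolding cc0 norm_eq_inner X_def Y_def Z_def .
  have H2: "Y \<bullet> Y = Z \<bullet> Z" using h2 unfolding cc5[of p1 p3] norm_eq_inner Y_def Z_def by simp
  have H1': "Y \<bullet> Y + Z \<bullet> Z + 2*(X \<bullet> Y) + 2*(Y \<bullet> Z) + 2*(Z \<bullet> X) = 0"
    using H1 by (simp add: inner_add_left inner_add_right inner_commute)
  have A: "(Z \<times> X) \<bullet> (Z \<times> X) = (Y \<times> (X + Z)) \<bullet> (Y \<times> (X + Z))"
    unfolding dot_cross using dot_alg1(1)[OF H1' H2]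
    by (simp add: inner_add_left inner_add_right inner_commute power2_eq_square algebra_simps)
  have B: "(X \<times> Y) \<bullet> (X \<times> Y) = (Z \<times> (X + Y)) \<bullet> (Z \<times> (X + Y))"
    unfolding dot_cross using dot_alg1(2)[OF H1' H2]
    by (simp add: inner_add_left inner_add_right inner_commute power2_eq_square algebra_simps)
  have A': "(d *\<^sub>R p2) \<bullet> (d *\<^sub>R p2) = (d *\<^sub>R (p1 - p3)) \<bullet> (d *\<^sub>R (p1 - p3))"
    using A unfolding X_def Y_def Z_def d_def cc1 cc2 .
  have B': "(d *\<^sub>R p3) \<bullet> (d *\<^sub>R p3) = (d *\<^sub>R (p2 - p1)) \<bullet> (d *\<^sub>R (p2 - p1))"
    using B unfolding X_def Y_def Z_def d_def cc3 cc4 .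
  have dd: "d * d \<noteq> 0" using D d_def by simp
  have "(d*d) * (p2 \<bullet> p2) = (d*d) * ((p1 - p3) \<bullet> (p1 - p3))" using A' by (simp add: algebra_simps)
  then have A'': "p2 \<bullet> p2 = (p1 - p3) \<bullet> (p1 - p3)" using dd by simp
  have "(d*d) * (p3 \<bullet> p3) = (d*d) * ((p2 - p1) \<bullet> (p2 - p1))" using B' by (simp add: algebra_simps)
  then have B'': "p3 \<bullet> p3 = (p2 - p1) \<bullet> (p2 - p1)" using dd by simp
  show "p1 \<bullet> p1 = p1 \<bullet> p2 + p1 \<bullet> p3" "p2 \<bullet> p2 = p3 \<bullet> p3 + p1 \<bullet> p2 - p1 \<bullet> p3"
    using A'' B'' by (simp_all add: inner_diff_left inner_diff_right inner_commute algebra_simps)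
qed

lemma factor_alg:
  fixes n1 n2 n3 g11 g12 g13 g22 g23 g33 :: real
  assumes "g11 = g12 + g13" "g22 = g33 + g12 - g13"
  shows "n1*((n1*n1*g11 + n2*n2*g22 + n3*n3*g33 + 2*n1*n2*g12 + 2*n1*n3*g13 + 2*n2*n3*g23)*g11 - (n1*g11 + n2*g12 + n3*g13)^2)
       + n2*((n1*n1*g11 + n2*n2*g22 + n3*n3*g33 + 2*n1*n2*g12 + 2*n1*n3*g13 + 2*n2*n3*g23)*g22 - (n1*g12 + n2*g22 + n3*g23)^2)
       + n3*((n1*n1*g11 + n2*n2*g22 + n3*n3*g33 + 2*n1*n2*g12 + 2*n1*n3*g13 + 2*n2*n3*g23)*g33 - (n1*g13 + n2*g23 + n3*g33)^2)
     = (n2+n3)*((g11*g33 - g13^2)*n1*(n1+n2+n3) + (g22*g33 - g23^2)*n2*n3)"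
  unfolding assms by algebra

lemma g1_fact:
  fixes p1 p2 p3 v :: "real^3"
  assumes D: "trip p1 p2 p3 \<noteq> 0"
    and r1: "p1 \<bullet> p1 = p1 \<bullet> p2 + p1 \<bullet> p3" and r2: "p2 \<bullet> p2 = p3 \<bullet> p3 + p1 \<bullet> p2 - p1 \<bullet> p3"
  shows "cyl_g1 p1 p2 p3 v = (trip p1 v p3 / trip p1 p2 p3 + trip p1 p2 v / trip p1 p2 p3) *
     ((((p1 \<bullet> p1)*(p3 \<bullet> p3) - (p1 \<bullet> p3)^2) * (trip v p2 p3 / trip p1 p2 p3) * 
       (trip v p2 p3 / trip p1 p2 p3 + trip p1 v p3 / trip p1 p2 p3 + trip p1 p2 v / trip p1 p2 p3)
      + ((p2 \<bullet> p2)*(p3 \<bullet> p3) - (p2 \<bullet> p3)^2) * (trip p1 v p3 / trip p1 p2 p3) * (trip p1 p2 v / trip p1 p2 p3)) / 2)"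
proof -
  have dM: "det (cyl_M p1 p2 p3) \<noteq> 0" using D det_M_trip by simp
  define d where "d = trip p1 p2 p3"
  define n1 where "n1 = trip v p2 p3 / d"
  define n2 where "n2 = trip p1 v p3 / d"
  define n3 where "n3 = trip p1 p2 v / d"
  have dn: "d \<noteq> 0" using D d_def by simp
  have veq: "v = n1 *\<^sub>R p1 + n2 *\<^sub>R p2 + n3 *\<^sub>R p3"
  proof -
    have "d *\<^sub>R v = d *\<^sub>R (n1 *\<^sub>R p1 + n2 *\<^sub>R p2 + n3 *\<^sub>R p3)"
      using cramer3b[of p1 p2 p3 v] dn unfolding n1_def n2_def n3_def d_def[symmetric]
      by (simp add: scaleR_add_right)
    then show ?thesis using dn by simp
  qed
  have g: "cyl_g1 p1 p2 p3 v = (n1 * ww p1 v + n2 * ww p2 v + n3 * ww p3 v) / 2"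
    unfolding g1_formula[OF dM] n1_def n2_def n3_def d_def using dn unfolding d_def
    by (simp add: field_simps)
  define V where "V = n1 *\<^sub>R p1 + n2 *\<^sub>R p2 + n3 *\<^sub>R p3"
  have vV: "v = V" using veq V_def by simp
  have e0: "v \<bullet> v = n1*n1*(p1 \<bullet> p1) + n2*n2*(p2 \<bullet> p2) + n3*n3*(p3 \<bullet> p3) + 2*n1*n2*(p1 \<bullet> p2) + 2*n1*n3*(p1 \<bullet> p3) + 2*n2*n3*(p2 \<bullet> p3)"
    unfolding vV V_def by (simp add: inner_add_left inner_add_right inner_commute algebra_simps)
  have e1: "v \<bullet> p1 = n1*(p1 \<bullet> p1) + n2*(p1 \<bullet> p2) + n3*(p1 \<bullet> p3)"
    unfolding vV V_def by (simp add: inner_add_left inner_add_right inner_commute algebra_simps)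
  have e2: "v \<bullet> p2 = n1*(p1 \<bullet> p2) + n2*(p2 \<bullet> p2) + n3*(p2 \<bullet> p3)"
    unfolding vV V_def by (simp add: inner_add_left inner_add_right inner_commute algebra_simps)
  have e3: "v \<bullet> p3 = n1*(p1 \<bullet> p3) + n2*(p2 \<bullet> p3) + n3*(p3 \<bullet> p3)"
    unfolding vV V_def by (simp add: inner_add_left inner_add_right inner_commute algebra_simps)
  have "n1 * ww p1 v + n2 * ww p2 v + n3 * ww p3 v = (n2+n3)*(((p1 \<bullet> p1)*(p3 \<bullet> p3) - (p1 \<bullet> p3)^2)*n1*(n1+n2+n3) + ((p2 \<bullet> p2)*(p3 \<bullet> p3) - (p2 \<bullet> p3)^2)*n2*n3)"
    unfolding ww_def e0 e1 e2 e3 by (rule factor_alg[OF r1 r2])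
  then show ?thesis unfolding g n1_def[symmetric] n2_def[symmetric] n3_def[symmetric] d_def[symmetric]
    by simp
qed

lemma inner_transpose_mv: "(x::real^3) \<bullet> (transpose (A::real^3^3) *v y) = (A *v x) \<bullet> y"
  by (simp add: inner_vec_def sum_3 matrix_vector_mult_def transpose_def algebra_simps)

lemma exists_aS:
  fixes p1 p2 p3 :: "real^3"
  assumes D: "trip p1 p2 p3 \<noteq> 0"
    and r1: "p1 \<bullet> p1 = p1 \<bullet> p2 + p1 \<bullet> p3" and r2: "p2 \<bullet> p2 = p3 \<bullet> p3 + p1 \<bullet> p2 - p1 \<bullet> p3"
    and ne: "norm (p1 \<times> p3) \<noteq> norm (p2 \<times> p3)"
  shows "\<exists>a S. a \<noteq> 0 \<and> transpose S = S \<and> (\<forall>k. S *v k = 0 \<longrightarrow> k = 0) \<and>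
           (\<forall>v. cyl_g1 p1 p2 p3 v = (a \<bullet> v) * (v \<bullet> (S *v v)))"
proof -
  define d where "d = trip p1 p2 p3"
  have dn: "d \<noteq> 0" using D d_def by simp
  define K1 where "K1 = (p1 \<bullet> p1)*(p3 \<bullet> p3) - (p1 \<bullet> p3)^2"
  define K2 where "K2 = (p2 \<bullet> p2)*(p3 \<bullet> p3) - (p2 \<bullet> p3)^2"
  have K1n: "K1 = (norm (p1 \<times> p3))^2" unfolding K1_def norm_cross by (simp add: power2_norm_eq_inner)
  have K2n: "K2 = (norm (p2 \<times> p3))^2" unfolding K2_def norm_cross by (simp add: power2_norm_eq_inner)
  have c13: "p1 \<times> p3 \<noteq> 0"
  proof
    assume "p1 \<times> p3 = 0"
    then have "trip p2 p3 p1 = 0" unfolding trip_def by (metis cc5 inner_zero_right neg_equal_0_iff_equal)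
    then show False using D trip_cyc by simp
  qed
  have c23: "p2 \<times> p3 \<noteq> 0"
  proof
    assume "p2 \<times> p3 = 0"
    then show False using D unfolding trip_def by simp
  qed
  have K1nz: "K1 \<noteq> 0" using c13 K1n by simp
  have K2nz: "K2 \<noteq> 0" using c23 K2n by simp
  have K12: "K1 \<noteq> K2" using ne K1n K2n by (metis norm_ge_zero power2_eq_iff_nonneg)
  define P :: "real^3^3" where "P = vector [(1/d) *\<^sub>R (p2 \<times> p3), (1/d) *\<^sub>R (p3 \<times> p1), (1/d) *\<^sub>R (p1 \<times> p2)]"
  define C :: "real^3^3" where "C = vector [vector [K1/2, K1/4, K1/4], vector [K1/4, 0, K2/4], vector [K1/4, K2/4, 0]]"
  define S where "S = transpose P ** C ** P"
  define a where "a = (1/d) *\<^sub>R ((p3 \<times> p1) + (p1 \<times> p2))"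
  have Pv: "P *v v = vector [trip v p2 p3 / d, trip p1 v p3 / d, trip p1 p2 v / d]" for v
    unfolding P_def trip_def using dn by (simp add: vec_eq_iff forall_3 matrix_vector_mult_def inner_vec_def sum_3 vector_def cross3_def) (simp add: field_simps)
  have av: "a \<bullet> v = trip p1 v p3 / d + trip p1 p2 v / d" for v
    unfolding a_def trip_def using dn by (simp add: v3simps) (simp add: field_simps)
  have Sv: "v \<bullet> (S *v v) = (K1 * (trip v p2 p3 / d) * (trip v p2 p3 / d + trip p1 v p3 / d + trip p1 p2 v / d)
      + K2 * (trip p1 v p3 / d) * (trip p1 p2 v / d)) / 2" for v
    unfolding S_def matrix_vector_mul_assoc[symmetric] inner_transpose_mv Pv
    unfolding C_def by (simp add: matrix_vector_mult_def inner_vec_def sum_3 algebra_simps)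
  have g: "cyl_g1 p1 p2 p3 v = (a \<bullet> v) * (v \<bullet> (S *v v))" for v
    unfolding av Sv g1_fact[OF D r1 r2] d_def K1_def K2_def by simp
  have an: "a \<noteq> 0"
  proof
    assume "a = 0"
    then have "a \<bullet> p2 = 0" by simp
    then show False unfolding av using dn trip_rep d_def by simp
  qed
  have CT: "transpose C = C" unfolding C_def by (simp add: vec_eq_iff forall_3 transpose_def vector_def)
  have ST: "transpose S = S" unfolding S_def by (simp add: matrix_transpose_mul CT matrix_mul_assoc)
  have nd: "k = 0" if Sk: "S *v k = 0" for k
  proof -
    define m where "m = P *v k"
    have z: "(P *v v) \<bullet> (C *v m) = 0" for v
    proof -
      have "v \<bullet> (S *v k) = 0" using Sk by simp
      then show ?thesis unfolding S_def matrix_vector_mul_assoc[symmetric] inner_transpose_mv m_def .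
    qed
    have P1: "P *v p1 = vector [1, 0, 0]" unfolding Pv using dn d_def trip_rep by simp
    have P2: "P *v p2 = vector [0, 1, 0]" unfolding Pv using dn d_def trip_rep by simp
    have P3: "P *v p3 = vector [0, 0, 1]" unfolding Pv using dn d_def trip_rep by simp
    have m1: "K1/2 * m$1 + K1/4 * m$2 + K1/4 * m$3 = 0" using z[of p1] unfolding P1 C_def
      by (simp add: matrix_vector_mult_def inner_vec_def sum_3)
    have m2: "K1/4 * m$1 + K2/4 * m$3 = 0" using z[of p2] unfolding P2 C_def
      by (simp add: matrix_vector_mult_def inner_vec_def sum_3)
    have m3: "K1/4 * m$1 + K2/4 * m$2 = 0" using z[of p3] unfolding P3 C_def
      by (simp add: matrix_vector_mult_def inner_vec_def sum_3)
    have "m$1 * (K2 - K1) = 0"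
    proof -
      have "K2 * m$2 = - K1 * m$1" "K2 * m$3 = - K1 * m$1" using m2 m3 by algebra+
      moreover have "K2 * (2 * m$1 + m$2 + m$3) = 0" using m1 K1nz by (simp add: algebra_simps) algebra
      ultimately show ?thesis by algebra
    qed
    then have z1: "m$1 = 0" using K12 by simp
    then have z2: "m$2 = 0" "m$3 = 0" using m2 m3 K2nz by simp_all
    have "trip k p2 p3 = 0" "trip p1 k p3 = 0" "trip p1 p2 k = 0"
      using z1 z2 dn unfolding m_def Pv by simp_all
    then have "d *\<^sub>R k = 0" using cramer3b[of p1 p2 p3 k] d_def by simp
    then show "k = 0" using dn by simp
  qed
  show ?thesis using an ST nd g by blast
qed


definition locext :: "(real^3 \<Rightarrow> real) \<Rightarrow> (real^3) set \<Rightarrow> real^3 \<Rightarrow> bool" where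
  "locext f X v \<longleftrightarrow> v \<in> X \<and> (\<exists>e>0. (\<forall>u\<in>X. dist u v < e \<longrightarrow> f u \<le> f v) \<or> (\<forall>u\<in>X. dist u v < e \<longrightarrow> f v \<le> f u))"

definition isoext :: "(real^3 \<Rightarrow> real) \<Rightarrow> (real^3) set \<Rightarrow> real^3 \<Rightarrow> bool" where
  "isoext f X v \<longleftrightarrow> locext f X v \<and> (\<exists>e>0. \<forall>u. locext f X u \<and> dist u v < e \<longrightarrow> u = v)"

definition W :: "(3 \<Rightarrow> real poly) \<Rightarrow> real \<Rightarrow> real^3" where
  "W c s = (1 / norm (cv c s)) *\<^sub>R cv c s"

lemma coeff_mult_top:
  fixes p q :: "real poly"
  assumes "degree p \<le> m" "degree q \<le> n"
  shows "coeff (p * q) (m + n) = coeff p m * coeff q n"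
proof -
  have "coeff (p * q) (m + n) = (\<Sum>i\<le>m+n. coeff p i * coeff q (m + n - i))" by (rule coeff_mult)
  also have "\<dots> = coeff p m * coeff q (m + n - m) + (\<Sum>i\<in>{..m+n} - {m}. coeff p i * coeff q (m + n - i))"
    by (subst sum.remove[of _ m]) auto
  also have "(\<Sum>i\<in>{..m+n} - {m}. coeff p i * coeff q (m + n - i)) = 0"
  proof (rule sum.neutral, rule ballI)
    fix i assume i: "i \<in> {..m+n} - {m}"
    show "coeff p i * coeff q (m + n - i) = 0"
    proof (cases "i < m")
      case True then have "degree q < m + n - i" using assms i by auto
      then show ?thesis by (simp add: coeff_eq_0)
    next
      case False then have "degree p < i" using assms i by auto
      then show ?thesis by (simp add: coeff_eq_0)
    qed
  qed
  finally show ?thesis by simp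
qed

lemma cv_cont: "isCont (cv c) s"
  unfolding cv_def isCont_def by (intro tendsto_vec_lambda) (auto intro: isCont_tendsto_compose[OF _ tendsto_ident_at] simp: isCont_def[symmetric])

lemma W_cont: "(\<forall>s. cv c s \<noteq> 0) \<Longrightarrow> isCont (W c) s"
  unfolding W_def by (intro continuous_intros cv_cont) auto

lemma core:
  fixes f :: "real^3 \<Rightarrow> real" and c :: "3 \<Rightarrow> real poly" and X Y F :: "(real^3) set"
  assumes pf4: "pf 4 f" and hom: "\<forall>t v. f (t *\<^sub>R v) = t^4 * f v"
    and deg: "\<forall>i. degree (c i) \<le> k" and k1: "1 \<le> k"
    and nz: "\<forall>s. cv c s \<noteq> 0"
    and inX: "\<forall>s. W c s \<in> X" and Xsym: "\<forall>v\<in>X. - v \<in> X"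
    and inj: "\<forall>s s'. W c s = W c s' \<or> W c s = - W c s' \<longrightarrow> s = s'"
    and Ycl: "closed Y" and Ffin: "finite F"
    and cover: "X \<subseteq> range (W c) \<union> range (\<lambda>s. - W c s) \<union> Y \<union> F"
    and KY: "finite ((range (W c) \<union> range (\<lambda>s. - W c s)) \<inter> Y)"
  shows "finite ({v. isoext f X v} \<inter> (range (W c) \<union> range (\<lambda>s. - W c s))) \<and>
         card ({v. isoext f X v} \<inter> (range (W c) \<union> range (\<lambda>s. - W c s))) \<le> 2 * (6 * k - 2)"
proof -
  define Kp where "Kp = range (W c) \<union> range (\<lambda>s. - W c s)"
  define E where "E = {v. isoext f X v}"
  obtain P where degP: "degree P \<le> 4 * k" and Pf: "\<forall>s. poly P s = f (cv c s)"
    using pf4 deg unfolding pf_def by blast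
  define Q where "Q = (\<Sum>i\<in>UNIV. c i * c i)"
  have Qv: "poly Q s = cv c s \<bullet> cv c s" for s
    unfolding Q_def cv_def by (simp add: poly_sum inner_vec_def)
  have degQ: "degree Q \<le> 2 * k"
    unfolding Q_def
  proof (rule degree_sum_le)
    fix i show "degree (c i * c i) \<le> 2 * k"
      using degree_mult_le[of "c i" "c i"] deg by (metis add_le_mono mult_2 order_trans)
  qed simp
  have Qpos: "poly Q s > 0" for s using nz Qv by simp
  have fsign: "f (- v) = f v" for v using hom[rule_format, of "-1" v] by simp
  have fW: "f (W c s) = poly P s / poly (Q * Q) s" for s
  proof -
    have n: "norm (cv c s) ^ 4 = poly Q s * poly Q s"
      unfolding Qv by (simp add: power2_norm_eq_inner[symmetric] power4_eq_xxxx power2_eq_square)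
    have "f (W c s) = (1 / norm (cv c s))^4 * f (cv c s)" unfolding W_def using hom by simp
    also have "\<dots> = poly P s / (norm (cv c s) ^ 4)" using Pf by (simp add: power_one_over)
    finally show ?thesis unfolding n by simp
  qed
  have fWm: "f (- W c s) = f (W c s)" for s by (rule fsign)
  define R where "R = pderiv P * Q - smult 2 (P * pderiv Q)"
  have der: "DERIV (\<lambda>s. f (W c s)) s :> poly R s / (poly Q s)^3" for s
  proof -
    have e: "(\<lambda>s. f (W c s)) = (\<lambda>s. poly P s / poly (Q * Q) s)" using fW by auto
    have q0: "poly (Q * Q) s \<noteq> 0" using Qpos[of s] by simp
    have "DERIV (\<lambda>s. poly P s / poly (Q * Q) s) s :>
        (poly (pderiv P) s * poly (Q * Q) s - poly P s * poly (pderiv (Q * Q)) s) / (poly (Q * Q) s * poly (Q * Q) s)"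
      by (rule DERIV_divide[OF poly_DERIV poly_DERIV q0])
    moreover have "(poly (pderiv P) s * poly (Q * Q) s - poly P s * poly (pderiv (Q * Q)) s) / (poly (Q * Q) s * poly (Q * Q) s)
        = poly R s / (poly Q s)^3"
      unfolding R_def using Qpos[of s] by (simp add: pderiv_mult field_simps power3_eq_cube) 
    ultimately show ?thesis unfolding e by simp
  qed
  have degR: "degree R \<le> 6 * k - 2"
  proof (rule degree_le, intro allI impI)
    fix i assume i: "6 * k - 2 < i"
    have d1: "degree (pderiv P * Q) \<le> 6 * k - 1"
      using degree_mult_le[of "pderiv P" Q] degree_pderiv[of P] degP degQ k1 by linarith
    have d2: "degree (smult 2 (P * pderiv Q)) \<le> 6 * k - 1"
      using degree_mult_le[of P "pderiv Q"] degree_pderiv[of Q] degP degQ k1 degree_smult_le[of 2 "P * pderiv Q"] by linarith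
    show "coeff R i = 0"
    proof (cases "i = 6 * k - 1")
      case True
      have dP': "degree (pderiv P) \<le> 4 * k - 1" using degree_pderiv[of P] degP by linarith
      have dQ': "degree (pderiv Q) \<le> 2 * k - 1" using degree_pderiv[of Q] degQ by linarith
      have i1: "(4 * k - 1) + 2 * k = 6 * k - 1" using k1 by linarith
      have a1: "coeff (pderiv P * Q) (6 * k - 1) = coeff (pderiv P) (4 * k - 1) * coeff Q (2 * k)"
        using coeff_mult_top[OF dP' degQ] unfolding i1 .
      have i2: "4 * k + (2 * k - 1) = 6 * k - 1" using k1 by linarith
      have a2: "coeff (P * pderiv Q) (6 * k - 1) = coeff P (4 * k) * coeff (pderiv Q) (2 * k - 1)"
        using coeff_mult_top[OF degP dQ'] unfolding i2 .
      have b1: "coeff (pderiv P) (4 * k - 1) = of_nat (4 * k) * coeff P (4 * k)"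
        using coeff_pderiv[of P "4 * k - 1"] k1 by (simp add: Suc_diff_le)
      have b2: "coeff (pderiv Q) (2 * k - 1) = of_nat (2 * k) * coeff Q (2 * k)"
        using coeff_pderiv[of Q "2 * k - 1"] k1 by (simp add: Suc_diff_le)
      show ?thesis unfolding R_def True coeff_diff coeff_smult a1 a2 b1 b2 by simp
    next
      case False
      then have "6 * k - 1 < i" using i by linarith
      then show ?thesis using d1 d2 unfolding R_def coeff_diff
        by (simp add: coeff_eq_0)
    qed
  qed
  define g where "g = (\<lambda>(\<sigma>::real) s. \<sigma> *\<^sub>R W c s)"
  have Kp_g: "Kp = {g \<sigma> s | \<sigma> s. \<sigma> = 1 \<or> \<sigma> = -1}"
    unfolding Kp_def g_def by (auto, metis scaleR_one, metis scaleR_minus1_left)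
  have g_cont: "isCont (g \<sigma>) s" for \<sigma> s
    unfolding g_def by (intro continuous_intros W_cont[OF nz])
  have fg: "f (g \<sigma> s) = f (W c s)" if "\<sigma> = 1 \<or> \<sigma> = -1" for \<sigma> s
    using that fWm unfolding g_def by auto
  have gX: "g \<sigma> s \<in> X" if "\<sigma> = 1 \<or> \<sigma> = -1" for \<sigma> s
    using that inX Xsym unfolding g_def by auto
  have ginj: "inj (g \<sigma>)" if "\<sigma> = 1 \<or> \<sigma> = -1" for \<sigma>
    using that inj unfolding g_def inj_def by auto
  have ginj2: "g \<sigma> s = g \<sigma> s' \<Longrightarrow> s = s'" if "\<sigma> = 1 \<or> \<sigma> = -1" for \<sigma> s s'
    using ginj[OF that] unfolding inj_def by blast
  have claim1: "poly R s0 = 0" if le: "locext f X (g \<sigma> s0)" and sg: "\<sigma> = 1 \<or> \<sigma> = -1" for \<sigma> s0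
  proof -
    obtain e where e: "e > 0" and ext: "(\<forall>u\<in>X. dist u (g \<sigma> s0) < e \<longrightarrow> f u \<le> f (g \<sigma> s0)) \<or>
        (\<forall>u\<in>X. dist u (g \<sigma> s0) < e \<longrightarrow> f (g \<sigma> s0) \<le> f u)"
      using le unfolding locext_def by blast
    have "\<forall>e>0. \<exists>d>0. \<forall>s. dist s s0 < d \<longrightarrow> dist (g \<sigma> s) (g \<sigma> s0) < e"
      using g_cont[of s0 \<sigma>] unfolding continuous_at_eps_delta .
    then have "\<exists>d>0. \<forall>s. dist s s0 < d \<longrightarrow> dist (g \<sigma> s) (g \<sigma> s0) < e"
      using e by blast
    then obtain d where d: "d > 0" and dd: "\<forall>s. dist s s0 < d \<longrightarrow> dist (g \<sigma> s) (g \<sigma> s0) < e"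
      by blast
    have Q3: "(poly Q s0)^3 \<noteq> 0" using Qpos[of s0] by simp
    from ext show ?thesis
    proof
      assume mx: "\<forall>u\<in>X. dist u (g \<sigma> s0) < e \<longrightarrow> f u \<le> f (g \<sigma> s0)"
      have "\<forall>s. \<bar>s0 - s\<bar> < d \<longrightarrow> f (W c s) \<le> f (W c s0)"
      proof (intro allI impI)
        fix s assume "\<bar>s0 - s\<bar> < d"
        then have "dist s s0 < d" by (simp add: dist_real_def abs_minus_commute)
        then have "dist (g \<sigma> s) (g \<sigma> s0) < e" using dd by blast
        then have "f (g \<sigma> s) \<le> f (g \<sigma> s0)" using mx gX[OF sg] by blast
        then show "f (W c s) \<le> f (W c s0)" using fg[OF sg] by simp
      qed
      then have "poly R s0 / (poly Q s0)^3 = 0" by (rule DERIV_local_max[OF der d])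
      then show ?thesis using Q3 by simp
    next
      assume mn: "\<forall>u\<in>X. dist u (g \<sigma> s0) < e \<longrightarrow> f (g \<sigma> s0) \<le> f u"
      have "\<forall>s. \<bar>s0 - s\<bar> < d \<longrightarrow> f (W c s0) \<le> f (W c s)"
      proof (intro allI impI)
        fix s assume "\<bar>s0 - s\<bar> < d"
        then have "dist s s0 < d" by (simp add: dist_real_def abs_minus_commute)
        then have "dist (g \<sigma> s) (g \<sigma> s0) < e" using dd by blast
        then have "f (g \<sigma> s0) \<le> f (g \<sigma> s)" using mn gX[OF sg] by blast
        then show "f (W c s0) \<le> f (W c s)" using fg[OF sg] by simp
      qed
      then have "poly R s0 / (poly Q s0)^3 = 0" by (rule DERIV_local_min[OF der d])
      then show ?thesis using Q3 by simp
    qed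
  qed
  have claim2: False if R0: "R = 0" and iso: "isoext f X (g \<sigma> s0)" and sg: "\<sigma> = 1 \<or> \<sigma> = -1" for \<sigma> s0
  proof -
    have const: "f (W c s) = f (W c 0)" for s
      by (rule DERIV_isconst_all) (use der R0 in simp)
    have fK: "f u = f (W c 0)" if "u \<in> Kp" for u
      using that fg const unfolding Kp_g by auto
    obtain e1 where e1: "e1 > 0" and isol: "\<forall>u. locext f X u \<and> dist u (g \<sigma> s0) < e1 \<longrightarrow> u = g \<sigma> s0"
      using iso unfolding isoext_def by blast
    have "\<forall>e>0. \<exists>d>0. \<forall>s. dist s s0 < d \<longrightarrow> dist (g \<sigma> s) (g \<sigma> s0) < e"
      using g_cont[of s0 \<sigma>] unfolding continuous_at_eps_delta .
    then have "\<exists>d>0. \<forall>s. dist s s0 < d \<longrightarrow> dist (g \<sigma> s) (g \<sigma> s0) < e1"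
      using e1 by blast
    then obtain d where d: "d > 0" and dd: "\<forall>s. dist s s0 < d \<longrightarrow> dist (g \<sigma> s) (g \<sigma> s0) < e1"
      by blast
    have gK: "g \<sigma> s \<in> Kp" for s using sg unfolding Kp_g by auto
    have fin1: "finite (g \<sigma> -` (Kp \<inter> Y))" using finite_vimageI[OF KY[folded Kp_def] ginj[OF sg]] .
    have fin2: "finite (g \<sigma> -` F)" using finite_vimageI[OF Ffin ginj[OF sg]] .
    have "infinite {s0<..<s0+d}" using d by simp
    then have "infinite ({s0<..<s0+d} - (g \<sigma> -` (Kp \<inter> Y) \<union> g \<sigma> -` F))" using fin1 fin2
      by (metis Diff_infinite_finite finite_UnI)
    then obtain s1 where "s1 \<in> {s0<..<s0+d} - (g \<sigma> -` (Kp \<inter> Y) \<union> g \<sigma> -` F)"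
      using infinite_imp_nonempty by blast
    then have s1: "s1 \<in> {s0<..<s0+d}" "g \<sigma> s1 \<notin> Kp \<inter> Y" "g \<sigma> s1 \<notin> F" by auto
    define y where "y = g \<sigma> s1"
    have yY: "y \<notin> Y \<union> F" using s1 gK unfolding y_def by auto
    have yx: "y \<noteq> g \<sigma> s0" using ginj2[OF sg, of s1 s0] s1(1) unfolding y_def by auto
    have ydist: "dist y (g \<sigma> s0) < e1" using dd s1(1) unfolding y_def dist_real_def by auto
    have "open (- (Y \<union> F))" using Ycl Ffin by (intro open_Compl closed_Un) (auto intro: finite_imp_closed)
    then obtain \<delta> where \<delta>: "\<delta> > 0" "ball y \<delta> \<subseteq> - (Y \<union> F)" using yY unfolding open_contains_ball by blast
    have "locext f X y"
      unfolding locext_def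
    proof (intro conjI exI[of _ \<delta>])
      show "y \<in> X" unfolding y_def using gX[OF sg] .
      show "\<delta> > 0" by fact
      show "(\<forall>u\<in>X. dist u y < \<delta> \<longrightarrow> f u \<le> f y) \<or> (\<forall>u\<in>X. dist u y < \<delta> \<longrightarrow> f y \<le> f u)"
      proof (rule disjI1, intro ballI impI)
        fix u assume u: "u \<in> X" "dist u y < \<delta>"
        then have "u \<in> ball y \<delta>" by (simp add: dist_commute)
        then have "u \<notin> Y \<union> F" using \<delta> by blast
        then have "u \<in> Kp" using u cover unfolding Kp_def by auto
        then show "f u \<le> f y" using fK[of u] fK[of y] gK unfolding y_def by simp
      qed
    qed
    then show False using isol ydist yx by blast
  qed
  show ?thesis
  proof (cases "R = 0")
    case True
    have "E \<inter> Kp = {}"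
    proof (rule ccontr)
      assume "E \<inter> Kp \<noteq> {}"
      then obtain x where x: "x \<in> E" "x \<in> Kp" by blast
      then obtain \<sigma> s0 where "x = g \<sigma> s0" "\<sigma> = 1 \<or> \<sigma> = -1" unfolding Kp_g by auto
      then show False using claim2[OF True] x unfolding E_def by blast
    qed
    then show ?thesis unfolding E_def[symmetric] Kp_def[symmetric] by simp
  next
    case False
    define Z where "Z = {s. poly R s = 0}"
    have Zfin: "finite Z" unfolding Z_def using poly_roots_finite[OF False] .
    have Zcard: "card Z \<le> 6 * k - 2" unfolding Z_def using card_poly_roots_bound[OF False] degR by linarith
    have sub: "E \<inter> Kp \<subseteq> g 1 ` Z \<union> g (-1) ` Z"
    proof
      fix x assume x: "x \<in> E \<inter> Kp"
      then obtain \<sigma> s0 where xs: "x = g \<sigma> s0" "\<sigma> = 1 \<or> \<sigma> = -1" unfolding Kp_g by auto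
      have "locext f X x" using x unfolding E_def isoext_def by blast
      then have "s0 \<in> Z" using claim1 xs unfolding Z_def by blast
      then show "x \<in> g 1 ` Z \<union> g (-1) ` Z" using xs by auto
    qed
    have "finite (g 1 ` Z \<union> g (-1) ` Z)" using Zfin by simp
    moreover have "card (g 1 ` Z \<union> g (-1) ` Z) \<le> 2 * (6 * k - 2)"
    proof -
      have "card (g 1 ` Z \<union> g (-1) ` Z) \<le> card (g 1 ` Z) + card (g (-1) ` Z)" by (rule card_Un_le)
      also have "\<dots> \<le> card Z + card Z" by (intro add_mono card_image_le Zfin)
      finally show ?thesis using Zcard by linarith
    qed
    ultimately show ?thesis using sub unfolding E_def[symmetric] Kp_def[symmetric]
      by (meson card_mono finite_subset order_trans)
  qed
qed


definition unitize :: "real^3 \<Rightarrow> real^3" where "unitize x = (1 / norm x) *\<^sub>R x"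

lemma W_unitize: "W c s = unitize (cv c s)" unfolding W_def unitize_def ..

lemma unitize_unit: "x \<noteq> 0 \<Longrightarrow> unitize x \<bullet> unitize x = 1"
  unfolding unitize_def by (simp add: power2_norm_eq_inner[symmetric] field_simps)

lemma L4:
  fixes v x :: "real^3"
  assumes "v \<bullet> v = 1" "v = l *\<^sub>R x"
  shows "v = unitize x \<or> v = - unitize x"
proof -
  have n: "norm v = 1" using assms(1) by (simp add: norm_eq_sqrt_inner)
  then have "\<bar>l\<bar> * norm x = 1" using assms(2) by simp
  then have nx: "norm x \<noteq> 0" by auto
  have l: "l = 1 / norm x \<or> l = - (1 / norm x)"
  proof (cases "l \<ge> 0")
    case True then have "l * norm x = 1" using \<open>\<bar>l\<bar> * norm x = 1\<close> by simp
    then show ?thesis using nx by (simp add: eq_divide_eq)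
  next
    case False then have "(- l) * norm x = 1" using \<open>\<bar>l\<bar> * norm x = 1\<close> by simp
    then have "- l = 1 / norm x" using nx by (simp add: eq_divide_eq)
    then show ?thesis by simp
  qed
  then show ?thesis using assms(2) unfolding unitize_def by auto
qed

lemma cross_perp:
  fixes x u w :: "real^3"
  assumes "x \<bullet> u = 0" "x \<bullet> w = 0"
  shows "((u \<times> w) \<bullet> (u \<times> w)) *\<^sub>R x = (x \<bullet> (u \<times> w)) *\<^sub>R (u \<times> w)"
proof -
  have i1: "(u \<times> w) \<times> (x \<times> (u \<times> w)) = ((u \<times> w) \<bullet> (u \<times> w)) *\<^sub>R x - ((u \<times> w) \<bullet> x) *\<^sub>R (u \<times> w)"
    by (simp add: v3simps)
  have i2: "x \<times> (u \<times> w) = (x \<bullet> w) *\<^sub>R u - (x \<bullet> u) *\<^sub>R w" by (simp add: v3simps)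
  show ?thesis using i1 unfolding i2 assms by (simp add: inner_commute)
qed

lemma L3:
  fixes x y :: "real^3"
  assumes "x \<bullet> x = 1" "y \<bullet> y = 1" "x \<times> y = 0"
  shows "x = y \<or> x = - y"
proof -
  have "y \<times> (x \<times> y) = (y \<bullet> y) *\<^sub>R x - (y \<bullet> x) *\<^sub>R y" by (simp add: v3simps)
  then have "x = (y \<bullet> x) *\<^sub>R y" using assms by simp
  from L4[OF assms(1) this] have "x = unitize y \<or> x = - unitize y" .
  moreover have "unitize y = y" unfolding unitize_def using assms(2) by (simp add: norm_eq_sqrt_inner)
  ultimately show ?thesis by simp
qed

lemma trip_cross_self: "trip x (x \<times> y) y = - ((x \<times> y) \<bullet> (x \<times> y))"
  unfolding trip_def by (simp add: v3simps)

lemma basis_zero: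
  fixes x p1 p2 p3 :: "real^3"
  assumes "trip p1 p2 p3 \<noteq> 0" "x \<bullet> p1 = 0" "x \<bullet> p2 = 0" "x \<bullet> p3 = 0"
  shows "x = 0"
  using cramer3[of p1 p2 p3 x] assms by (simp add: inner_commute)

lemma trip_lin1: "trip (a *\<^sub>R x + b *\<^sub>R y) u w = a * trip x u w + b * trip y u w"
  unfolding trip_def by (simp add: inner_add_left)
lemma trip_lin2: "trip u (a *\<^sub>R x + b *\<^sub>R y) w = a * trip u x w + b * trip u y w"
  unfolding trip_def by (simp add: cross_add_left cross_mult_left inner_add_right)
lemma trip_lin3: "trip u w (a *\<^sub>R x + b *\<^sub>R y) = a * trip u w x + b * trip u w y"
  unfolding trip_def by (simp add: cross_add_right cross_mult_right inner_add_right)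

lemma trip_cross0: "u \<times> w = 0 \<Longrightarrow> trip u w z = 0"
  unfolding trip_def by (metis cross_skew dot_cross_det inner_zero_right neg_equal_0_iff_equal trip_def trip_cyc(1) trip_cyc(2))

section \<open>Quadratic form facts\<close>

locale qform =
  fixes S :: "real^3^3"
  assumes ST: "transpose S = S" and nd: "\<forall>k. S *v k = 0 \<longrightarrow> k = 0"
begin

definition bf :: "real^3 \<Rightarrow> real^3 \<Rightarrow> real" where "bf u v = u \<bullet> (S *v v)"
abbreviation qf :: "real^3 \<Rightarrow> real" where "qf v \<equiv> bf v v"

lemma bf_sym: "bf u v = bf v u"
proof -
  have "u \<bullet> (S *v v) = u \<bullet> (transpose S *v v)" using ST by simp
  also have "\<dots> = (S *v u) \<bullet> v" by (rule inner_transpose_mv)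
  finally show ?thesis unfolding bf_def by (simp add: inner_commute)
qed

lemma bf_add1: "bf (x + y) z = bf x z + bf y z" unfolding bf_def by (simp add: inner_add_left)
lemma bf_add2: "bf z (x + y) = bf z x + bf z y" unfolding bf_def by (simp add: matrix_vector_right_distrib inner_add_right)
lemma bf_scale1: "bf (t *\<^sub>R x) z = t * bf x z" unfolding bf_def by simp
lemma bf_scale2: "bf z (t *\<^sub>R x) = t * bf z x" unfolding bf_def by (simp add: matrix_vector_mult_scaleR)
lemma bf_minus1: "bf (- x) z = - bf x z" unfolding bf_def by simp
lemma bf_minus2: "bf z (- x) = - bf z x" using bf_scale2[of z "-1" x] by simp
lemma bf_diff1: "bf (x - y) z = bf x z - bf y z" unfolding bf_def by (simp add: inner_diff_left)
lemma bf_diff2: "bf z (x - y) = bf z x - bf z y" using bf_add2[of z x "- y"] bf_minus2 by simp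

lemmas bf_simps = bf_add1 bf_add2 bf_scale1 bf_scale2 bf_minus1 bf_minus2 bf_diff1 bf_diff2

lemma qf_lin: "qf (a *\<^sub>R x + b *\<^sub>R y) = a^2 * qf x + 2 * a * b * bf x y + b^2 * qf y"
  by (simp add: bf_simps bf_sym[of y x] power2_eq_square algebra_simps)

lemma bf_zero_all: "(\<forall>v. bf k v = 0) \<Longrightarrow> k = 0"
proof -
  assume "\<forall>v. bf k v = 0"
  then have "bf k (S *v k) = 0" by blast
  then have "bf (S *v k) k = 0" using bf_sym by simp
  then have "(S *v k) \<bullet> (S *v k) = 0" unfolding bf_def .
  then have "S *v k = 0" by simp
  then show "k = 0" using nd by blast
qed

lemma L2:
  assumes "qf u = 0" "qf w = 0" "bf u w = 0" "u \<times> w \<noteq> 0"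
  shows False
proof -
  define n where "n = u \<times> w"
  have nn: "n \<bullet> n \<noteq> 0" using assms(4) n_def by simp
  have Su: "(n \<bullet> n) *\<^sub>R (S *v u) = ((S *v u) \<bullet> n) *\<^sub>R n"
    unfolding n_def by (rule cross_perp) (use assms bf_sym in \<open>auto simp: bf_def inner_commute\<close>)
  have Sw: "(n \<bullet> n) *\<^sub>R (S *v w) = ((S *v w) \<bullet> n) *\<^sub>R n"
    unfolding n_def by (rule cross_perp) (use assms bf_sym in \<open>auto simp: bf_def inner_commute\<close>)
  define lu where "lu = ((S *v u) \<bullet> n) / (n \<bullet> n)"
  define lw where "lw = ((S *v w) \<bullet> n) / (n \<bullet> n)"
  have Su': "S *v u = lu *\<^sub>R n" using Su nn unfolding lu_def
    by (metis (no_types, lifting) divide_inverse_commute scaleR_scaleR inverse_eq_divide left_inverse scaleR_one)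
  have Sw': "S *v w = lw *\<^sub>R n" using Sw nn unfolding lw_def
    by (metis (no_types, lifting) divide_inverse_commute scaleR_scaleR inverse_eq_divide left_inverse scaleR_one)
  have "S *v (lw *\<^sub>R u - lu *\<^sub>R w) = 0"
    by (simp add: matrix_vector_mult_diff_distrib matrix_vector_mult_scaleR Su' Sw')
  then have z: "lw *\<^sub>R u - lu *\<^sub>R w = 0" using nd by blast
  have "(lw *\<^sub>R u - lu *\<^sub>R w) \<times> w = lw *\<^sub>R n" unfolding n_def by (simp add: v3simps)
  then have "lw = 0" using z assms(4) n_def by simp
  have "u \<times> (lw *\<^sub>R u - lu *\<^sub>R w) = - lu *\<^sub>R n" unfolding n_def by (simp add: v3simps)
  then have "lu = 0" using z assms(4) n_def by simp
  then have "S *v u = 0" using Su' by simp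
  then have "u = 0" using nd by blast
  then show False using assms(4) by simp
qed

end


lemma cv_W: "cv c s = norm (cv c s) *\<^sub>R W c s"
  unfolding W_def by (cases "cv c s = 0") auto

lemma W_par:
  assumes "W c s = \<sigma> *\<^sub>R W c s'"
  shows "cv c s = (\<sigma> * norm (cv c s) / norm (cv c s')) *\<^sub>R cv c s'"
proof -
  have "cv c s = norm (cv c s) *\<^sub>R (\<sigma> *\<^sub>R W c s')" using cv_W[of c s] assms by simp
  then show ?thesis unfolding W_def by (simp add: scaleR_scaleR mult.commute)
qed

section \<open>Circle parametrisation\<close>

definition circ :: "real^3 \<Rightarrow> real^3 \<Rightarrow> 3 \<Rightarrow> real poly" where
  "circ a w = (\<lambda>i. [: (unitize (a \<times> w))$i, w$i :])"

lemma circ_basic: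
  fixes a w :: "real^3"
  assumes a: "a \<noteq> 0" and aw: "a \<bullet> w = 0" and ww: "w \<bullet> w = 1"
  shows "a \<times> w \<noteq> 0" "unitize (a \<times> w) \<bullet> unitize (a \<times> w) = 1" "unitize (a \<times> w) \<bullet> w = 0"
    "a \<bullet> unitize (a \<times> w) = 0"
    "\<forall>i. degree (circ a w i) \<le> 1"
    "cv (circ a w) s = unitize (a \<times> w) + s *\<^sub>R w"
proof -
  have "(norm (a \<times> w))^2 = (norm a)^2 * (norm w)^2 - (a \<bullet> w)^2" by (rule norm_cross)
  then have "(norm (a \<times> w))^2 = (norm a)^2" using aw ww by (simp add: power2_norm_eq_inner)
  then show nz: "a \<times> w \<noteq> 0" using a by auto
  show "unitize (a \<times> w) \<bullet> unitize (a \<times> w) = 1" using unitize_unit[OF nz] .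
  show "unitize (a \<times> w) \<bullet> w = 0" unfolding unitize_def by (simp add: dot_cross_self)
  show "a \<bullet> unitize (a \<times> w) = 0" unfolding unitize_def by (simp add: dot_cross_self)
  show "\<forall>i. degree (circ a w i) \<le> 1" unfolding circ_def by simp
  show "cv (circ a w) s = unitize (a \<times> w) + s *\<^sub>R w"
    unfolding cv_def circ_def by (simp add: vec_eq_iff)
qed

lemma circ_props:
  fixes a w :: "real^3"
  assumes a: "a \<noteq> 0" and aw: "a \<bullet> w = 0" and ww: "w \<bullet> w = 1"
  shows "\<forall>s. cv (circ a w) s \<noteq> 0"
    "\<forall>s. a \<bullet> W (circ a w) s = 0 \<and> W (circ a w) s \<bullet> W (circ a w) s = 1"
    "\<forall>s s'. W (circ a w) s = W (circ a w) s' \<or> W (circ a w) s = - W (circ a w) s' \<longrightarrow> s = s'"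
    "\<And>v. a \<bullet> v = 0 \<Longrightarrow> v \<bullet> v = 1 \<Longrightarrow> v \<in> range (W (circ a w)) \<union> range (\<lambda>s. - W (circ a w) s) \<union> {w, - w}"
proof -
  define w' where "w' = unitize (a \<times> w)"
  note b = circ_basic[OF assms, folded w'_def]
  have cvs: "cv (circ a w) s = w' + s *\<^sub>R w" for s using b(6) .
  have ww': "w \<bullet> w' = 0" using b(3) by (simp add: inner_commute)
  have cvw': "cv (circ a w) s \<bullet> w' = 1" for s unfolding cvs inner_add_left inner_scaleR_left using b(2) ww' by simp
  have cvw: "cv (circ a w) s \<bullet> w = s" for s unfolding cvs inner_add_left inner_scaleR_left using b(3) ww by simp
  show nz: "\<forall>s. cv (circ a w) s \<noteq> 0" using cvw' by (metis inner_zero_left zero_neq_one)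
  show "\<forall>s. a \<bullet> W (circ a w) s = 0 \<and> W (circ a w) s \<bullet> W (circ a w) s = 1"
  proof
    fix s
    have "a \<bullet> cv (circ a w) s = 0" unfolding cvs using b(4) aw by (simp add: inner_add_right)
    then show "a \<bullet> W (circ a w) s = 0 \<and> W (circ a w) s \<bullet> W (circ a w) s = 1"
      unfolding W_unitize using unitize_unit nz by (simp add: unitize_def)
  qed
  show "\<forall>s s'. W (circ a w) s = W (circ a w) s' \<or> W (circ a w) s = - W (circ a w) s' \<longrightarrow> s = s'"
  proof (intro allI impI)
    fix s s'
    assume h: "W (circ a w) s = W (circ a w) s' \<or> W (circ a w) s = - W (circ a w) s'"
    obtain m where m: "cv (circ a w) s = m *\<^sub>R cv (circ a w) s'"
    proof -
      from h have "\<exists>\<sigma>. W (circ a w) s = \<sigma> *\<^sub>R W (circ a w) s'" by (metis scaleR_one scaleR_minus1_left)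
      then obtain \<sigma> where "W (circ a w) s = \<sigma> *\<^sub>R W (circ a w) s'" by blast
      from W_par[OF this] show ?thesis using that by blast
    qed
    have "1 = m" using arg_cong[OF m, of "\<lambda>x. x \<bullet> w'"] cvw' by simp
    moreover have "s = m * s'" using arg_cong[OF m, of "\<lambda>x. x \<bullet> w"] cvw by simp
    ultimately show "s = s'" by simp
  qed
  show "v \<in> range (W (circ a w)) \<union> range (\<lambda>s. - W (circ a w) s) \<union> {w, - w}" if v: "a \<bullet> v = 0" "v \<bullet> v = 1" for v
  proof -
    define x where "x = v - (v \<bullet> w') *\<^sub>R w' - (v \<bullet> w) *\<^sub>R w"
    have "x \<bullet> a = v \<bullet> a - (v \<bullet> w') * (w' \<bullet> a) - (v \<bullet> w) * (w \<bullet> a)" unfolding x_def by (simp add: inner_diff_left)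
    then have xa: "x \<bullet> a = 0" using v b(4) aw by (simp add: inner_commute)
    have "x \<bullet> w = v \<bullet> w - (v \<bullet> w') * (w' \<bullet> w) - (v \<bullet> w) * (w \<bullet> w)" unfolding x_def by (simp add: inner_diff_left)
    then have xw: "x \<bullet> w = 0" using b(3) ww by simp
    have "x \<bullet> w' = v \<bullet> w' - (v \<bullet> w') * (w' \<bullet> w') - (v \<bullet> w) * (w \<bullet> w')" unfolding x_def by (simp add: inner_diff_left)
    then have xw': "x \<bullet> w' = 0" using b(2) ww' by simp
    have xn: "x \<bullet> (a \<times> w) = 0"
    proof -
      have "a \<times> w = norm (a \<times> w) *\<^sub>R w'" unfolding w'_def unitize_def using b(1) by simp
      then show ?thesis using xw' by (metis inner_scaleR_right mult_zero_right)
    qed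
    have "((a \<times> w) \<bullet> (a \<times> w)) *\<^sub>R x = 0" using cross_perp[OF xa xw] xn by simp
    then have "x = 0" using b(1) by simp
    then have vdec: "v = (v \<bullet> w') *\<^sub>R w' + (v \<bullet> w) *\<^sub>R w" unfolding x_def by (simp add: algebra_simps)
    show ?thesis
    proof (cases "v \<bullet> w' = 0")
      case False
      have "v = (v \<bullet> w') *\<^sub>R cv (circ a w) ((v \<bullet> w) / (v \<bullet> w'))"
        unfolding cvs using False by (subst vdec) (simp add: scaleR_add_right)
      from L4[OF v(2) this] show ?thesis unfolding W_unitize by auto
    next
      case True
      then have "v = (v \<bullet> w) *\<^sub>R w" using vdec by simp
      from L4[OF v(2) this] have "v = unitize w \<or> v = - unitize w" .
      moreover have "unitize w = w" unfolding unitize_def using ww by (simp add: norm_eq_sqrt_inner)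
      ultimately show ?thesis by auto
    qed
  qed
qed


section \<open>Cone parametrisation\<close>

lemma scale_solve: "(k::real) \<noteq> 0 \<Longrightarrow> k *\<^sub>R (x::real^3) = y \<Longrightarrow> x = (1 / k) *\<^sub>R y"
  by auto

lemma trip_swap23: "trip x y z = - trip x z y"
  unfolding trip_def by (simp add: v3simps)

context qform
begin

definition vv :: "real^3 \<Rightarrow> real^3 \<Rightarrow> real^3" where
  "vv v0 d = qf d *\<^sub>R v0 - (2 * bf v0 d) *\<^sub>R d"

definition cone :: "real^3 \<Rightarrow> real^3 \<Rightarrow> real^3 \<Rightarrow> 3 \<Rightarrow> real poly" where
  "cone v0 d0 d1 = (\<lambda>i. smult (v0$i) [:qf d0, 2 * bf d0 d1, qf d1:] - smult 2 ([:bf v0 d0, bf v0 d1:] * [:d0$i, d1$i:]))"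

lemma cone_deg: "\<forall>i. degree (cone v0 d0 d1 i) \<le> 2"
proof
  fix i
  have "degree (smult (v0$i) [:qf d0, 2 * bf d0 d1, qf d1:]) \<le> 2"
    by (rule order.trans[OF degree_smult_le]) simp
  moreover have "degree (smult 2 ([:bf v0 d0, bf v0 d1:] * [:d0$i, d1$i:])) \<le> 2"
    by (rule order.trans[OF degree_smult_le], rule order.trans[OF degree_mult_le]) simp
  ultimately show "degree (cone v0 d0 d1 i) \<le> 2" unfolding cone_def by (rule degree_diff_le)
qed

lemma cone_cv: "cv (cone v0 d0 d1) s = vv v0 (d0 + s *\<^sub>R d1)"
proof -
  have q: "qf (d0 + s *\<^sub>R d1) = qf d0 + 2 * s * bf d0 d1 + s^2 * qf d1"
    using qf_lin[of 1 d0 s d1] by simp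
  have b: "bf v0 (d0 + s *\<^sub>R d1) = bf v0 d0 + s * bf v0 d1" by (simp add: bf_simps)
  show ?thesis unfolding cv_def cone_def vv_def q b
    by (simp add: vec_eq_iff algebra_simps power2_eq_square)
qed

lemma vv_q: "qf v0 = 0 \<Longrightarrow> qf (vv v0 d) = 0"
  unfolding vv_def by (simp add: bf_simps bf_sym[of d v0] algebra_simps)

lemma vv_hom: "vv v0 (t *\<^sub>R d) = t^2 *\<^sub>R vv v0 d"
  unfolding vv_def by (simp add: bf_simps power2_eq_square algebra_simps)

lemma vv_nz: "v0 \<times> d \<noteq> 0 \<Longrightarrow> qf v0 = 0 \<Longrightarrow> vv v0 d \<noteq> 0"
proof
  assume n: "v0 \<times> d \<noteq> 0" and q0: "qf v0 = 0" and z: "vv v0 d = 0"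
  have "(vv v0 d) \<times> d = qf d *\<^sub>R (v0 \<times> d)" unfolding vv_def by (simp add: v3simps)
  then have qd: "qf d = 0" using z n by simp
  have "v0 \<times> (vv v0 d) = - (2 * bf v0 d) *\<^sub>R (v0 \<times> d)" unfolding vv_def by (simp add: v3simps)
  then have bd: "bf v0 d = 0" using z n by simp
  show False using L2[OF q0 qd bd n] .
qed

lemma vv_shift: "qf v0 = 0 \<Longrightarrow> qf x = 0 \<Longrightarrow> vv v0 (x - t *\<^sub>R v0) = - (2 * bf v0 x) *\<^sub>R x"
  unfolding vv_def by (simp add: bf_simps bf_sym[of x v0] algebra_simps)

lemma b_nonzero:
  assumes q0: "qf v0 = 0" and u0: "v0 \<bullet> v0 = 1" and T: "trip v0 d0 d1 \<noteq> 0"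
    and b0: "bf v0 d0 = 0" and b1: "bf v0 d1 = 0"
  shows False
proof -
  have e: "bf v0 d = d \<bullet> (S *v v0)" for d using bf_sym[of v0 d] unfolding bf_def .
  have "S *v v0 = 0"
    by (rule basis_zero[OF T]) (use q0 b0 b1 e in \<open>auto simp: inner_commute\<close>)
  then have "v0 = 0" using nd by blast
  then show False using u0 by simp
qed

lemma trip_vv2: "trip v0 (vv v0 d) z = - (2 * bf v0 d) * trip v0 d z"
  unfolding vv_def trip_def by (simp add: v3simps)
lemma trip_vv3: "trip v0 z (vv v0 d) = - (2 * bf v0 d) * trip v0 z d"
  unfolding vv_def trip_def by (simp add: v3simps)

lemma cone_props:
  assumes q0: "qf v0 = 0" and u0: "v0 \<bullet> v0 = 1" and T: "trip v0 d0 d1 \<noteq> 0"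
  shows "\<forall>s. cv (cone v0 d0 d1) s \<noteq> 0"
    "\<forall>s. qf (W (cone v0 d0 d1) s) = 0 \<and> W (cone v0 d0 d1) s \<bullet> W (cone v0 d0 d1) s = 1"
    "\<forall>s s'. W (cone v0 d0 d1) s = W (cone v0 d0 d1) s' \<or> W (cone v0 d0 d1) s = - W (cone v0 d0 d1) s' \<longrightarrow> s = s'"
    "\<And>x. qf x = 0 \<Longrightarrow> x \<bullet> x = 1 \<Longrightarrow> x \<in> range (W (cone v0 d0 d1)) \<union> range (\<lambda>s. - W (cone v0 d0 d1) s)
         \<union> {unitize (vv v0 d1), - unitize (vv v0 d1)}"
proof -
  define c where "c = cone v0 d0 d1"
  define t where "t = trip v0 d0 d1"
  have tds: "trip v0 (d0 + s *\<^sub>R d1) d1 = t" for s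
    unfolding t_def using trip_lin2[of v0 1 d0 s d1 d1] trip_rep by simp
  have tds2: "trip v0 d0 (d0 + s *\<^sub>R d1) = s * t" for s
    unfolding t_def using trip_lin3[of v0 d0 1 d0 s d1] trip_rep by simp
  have crs: "v0 \<times> (d0 + s *\<^sub>R d1) \<noteq> 0" for s
    using trip_cross0[of v0 "d0 + s *\<^sub>R d1" d1] tds[of s] T t_def by auto
  show nz: "\<forall>s. cv (cone v0 d0 d1) s \<noteq> 0"
    unfolding cone_cv using vv_nz[OF crs q0] by blast
  show "\<forall>s. qf (W (cone v0 d0 d1) s) = 0 \<and> W (cone v0 d0 d1) s \<bullet> W (cone v0 d0 d1) s = 1"
  proof
    fix s
    have "qf (cv (cone v0 d0 d1) s) = 0" unfolding cone_cv by (rule vv_q[OF q0])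
    then show "qf (W (cone v0 d0 d1) s) = 0 \<and> W (cone v0 d0 d1) s \<bullet> W (cone v0 d0 d1) s = 1"
      unfolding W_def using nz by (simp add: bf_simps power2_norm_eq_inner[symmetric] field_simps)
  qed
  define B where "B s = bf v0 (d0 + s *\<^sub>R d1)" for s
  have Bl: "B s = bf v0 d0 + s * bf v0 d1" for s unfolding B_def by (simp add: bf_simps)
  have co1: "trip v0 (cv c s) d1 = - 2 * B s * t" for s
    unfolding c_def cone_cv trip_vv2 tds B_def by simp
  have co2: "trip v0 d0 (cv c s) = - 2 * B s * (s * t)" for s
    unfolding c_def cone_cv trip_vv3 tds2 B_def by simp
  show "\<forall>s s'. W (cone v0 d0 d1) s = W (cone v0 d0 d1) s' \<or> W (cone v0 d0 d1) s = - W (cone v0 d0 d1) s' \<longrightarrow> s = s'"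
  proof (intro allI impI)
    fix s s'
    assume h: "W (cone v0 d0 d1) s = W (cone v0 d0 d1) s' \<or> W (cone v0 d0 d1) s = - W (cone v0 d0 d1) s'"
    from h have "\<exists>\<sigma>. W c s = \<sigma> *\<^sub>R W c s'" unfolding c_def by (metis scaleR_one scaleR_minus1_left)
    then obtain \<sigma> where "W c s = \<sigma> *\<^sub>R W c s'" by blast
    from W_par[OF this] obtain m where m: "cv c s = m *\<^sub>R cv c s'" by blast
    have m0: "m \<noteq> 0" using m nz unfolding c_def by auto
    have t0: "t \<noteq> 0" using T t_def by simp
    have e1: "B s = m * B s'" using arg_cong[OF m, of "\<lambda>x. trip v0 x d1"] co1[of s] co1[of s'] t0
      by (simp add: trip_def cross_mult_left)
    have e2: "B s * s = m * B s' * s'" using arg_cong[OF m, of "\<lambda>x. trip v0 d0 x"] co2[of s] co2[of s'] t0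
      by (simp add: trip_def cross_mult_right)
    show "s = s'"
    proof (cases "B s = 0")
      case False
      then show ?thesis using e1 e2 by simp
    next
      case True
      then have "B s' = 0" using e1 m0 by simp
      then have "bf v0 d0 + s * bf v0 d1 = 0" "bf v0 d0 + s' * bf v0 d1 = 0" using True Bl by auto
      then have "(s - s') * bf v0 d1 = 0" by algebra
      then show ?thesis using b_nonzero[OF q0 u0 T] \<open>bf v0 d0 + s * bf v0 d1 = 0\<close> by auto
    qed
  qed
  show "x \<in> range (W (cone v0 d0 d1)) \<union> range (\<lambda>s. - W (cone v0 d0 d1) s) \<union> {unitize (vv v0 d1), - unitize (vv v0 d1)}"
    if qx: "qf x = 0" and ux: "x \<bullet> x = 1" for x
  proof -
    have t0: "t \<noteq> 0" using T t_def by simp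
    define al where "al = trip x d0 d1 / t"
    define be where "be = trip v0 x d1 / t"
    define ga where "ga = trip v0 d0 x / t"
    have xdec: "x = al *\<^sub>R v0 + be *\<^sub>R d0 + ga *\<^sub>R d1"
    proof -
      have "t *\<^sub>R x = t *\<^sub>R (al *\<^sub>R v0 + be *\<^sub>R d0 + ga *\<^sub>R d1)"
        using cramer3b[of v0 d0 d1 x] t0 unfolding al_def be_def ga_def t_def[symmetric] by (simp add: scaleR_add_right)
      then show ?thesis using t0 by simp
    qed
    have vvx: "vv v0 (be *\<^sub>R d0 + ga *\<^sub>R d1) = - (2 * bf v0 x) *\<^sub>R x"
    proof -
      have "be *\<^sub>R d0 + ga *\<^sub>R d1 = x - al *\<^sub>R v0" using xdec by (simp add: algebra_simps)
      then show ?thesis using vv_shift[OF q0 qx, of al] by simp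
    qed
    let ?K = "range (W c) \<union> range (\<lambda>s. - W c s)"
    have inK: "y \<in> ?K" if "y \<bullet> y = 1" "y = l *\<^sub>R cv c s" for y l s
      using L4[OF that] unfolding W_unitize by auto
    show ?thesis
    proof (cases "bf v0 x = 0")
      case False
      show ?thesis
      proof (cases "be = 0")
        case False
        have "vv v0 (be *\<^sub>R d0 + ga *\<^sub>R d1) = be^2 *\<^sub>R cv c (ga / be)"
        proof -
          have "be *\<^sub>R d0 + ga *\<^sub>R d1 = be *\<^sub>R (d0 + (ga / be) *\<^sub>R d1)" using False by (simp add: scaleR_add_right)
          then show ?thesis unfolding c_def cone_cv using vv_hom by simp
        qed
        then have "(- (2 * bf v0 x)) *\<^sub>R x = be^2 *\<^sub>R cv c (ga / be)" using vvx by simp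
        then have "x = (1 / (- (2 * bf v0 x))) *\<^sub>R (be^2 *\<^sub>R cv c (ga / be))"
          by (rule scale_solve[rotated]) (use \<open>bf v0 x \<noteq> 0\<close> in simp)
        then have "x = (1 / (- (2 * bf v0 x)) * be^2) *\<^sub>R cv c (ga / be)" by simp
        then have "x \<in> range (W c) \<union> range (\<lambda>s. - W c s)" using inK[OF ux] by blast
        then show ?thesis unfolding c_def by blast
      next
        case True
        have "vv v0 (be *\<^sub>R d0 + ga *\<^sub>R d1) = ga^2 *\<^sub>R vv v0 d1" using True by (simp add: vv_hom)
        then have "(- (2 * bf v0 x)) *\<^sub>R x = ga^2 *\<^sub>R vv v0 d1" using vvx by simp
        then have "x = (1 / (- (2 * bf v0 x))) *\<^sub>R (ga^2 *\<^sub>R vv v0 d1)"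
          by (rule scale_solve[rotated]) (use \<open>bf v0 x \<noteq> 0\<close> in simp)
        then have "x = (1 / (- (2 * bf v0 x)) * ga^2) *\<^sub>R vv v0 d1" by simp
        from L4[OF ux this] show ?thesis by auto
      qed
    next
      case True
      have "v0 \<times> x = 0" using L2[OF q0 qx True] by blast
      then have xv: "x = v0 \<or> x = - v0" using L3[OF ux u0] by (metis cross_skew neg_equal_0_iff_equal)
      show ?thesis
      proof (cases "bf v0 d1 = 0")
        case False
        define s0 where "s0 = - bf v0 d0 / bf v0 d1"
        have Bs0: "B s0 = 0" unfolding Bl s0_def using False by simp
        have cvs0: "cv c s0 = qf (d0 + s0 *\<^sub>R d1) *\<^sub>R v0" unfolding c_def cone_cv vv_def using Bs0 B_def by simp
        have "qf (d0 + s0 *\<^sub>R d1) \<noteq> 0"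
        proof
          assume "qf (d0 + s0 *\<^sub>R d1) = 0"
          then have "cv c s0 = 0" using cvs0 by simp
          then show False using nz c_def by blast
        qed
        then have "v0 = (1 / qf (d0 + s0 *\<^sub>R d1)) *\<^sub>R cv c s0" using cvs0 by simp
        then have v0K: "v0 \<in> ?K" using inK[OF u0] by blast
        have "- v0 \<in> ?K"
        proof -
          from v0K obtain s1 where "v0 = W c s1 \<or> v0 = - W c s1" by blast
          then show ?thesis by (metis UnI1 UnI2 minus_minus rangeI)
        qed
        then show ?thesis using xv v0K unfolding c_def by auto
      next
        case True
        have crs1: "v0 \<times> d1 \<noteq> 0" using trip_cross0[of v0 d1 d0] trip_swap23[of v0 d0 d1] T by auto
        have "vv v0 d1 = qf d1 *\<^sub>R v0" unfolding vv_def using True by simp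
        moreover have "vv v0 d1 \<noteq> 0" using vv_nz[OF crs1 q0] .
        ultimately have "qf d1 \<noteq> 0" by auto
        then have "v0 = (1 / qf d1) *\<^sub>R vv v0 d1" using \<open>vv v0 d1 = qf d1 *\<^sub>R v0\<close> by simp
        from L4[OF u0 this] have "v0 = unitize (vv v0 d1) \<or> v0 = - unitize (vv v0 d1)" .
        then have "x = unitize (vv v0 d1) \<or> x = - unitize (vv v0 d1)" using xv by (metis minus_minus)
        then show ?thesis by blast
      qed
    qed
  qed
qed

end


context qform
begin

lemma qf_W: "qf (W c s) = (1 / norm (cv c s))^2 * qf (cv c s)"
  unfolding W_def by (simp add: bf_simps power2_eq_square)

lemma qf_cont: "continuous_on UNIV qf"
  unfolding bf_def by (intro continuous_intros bounded_linear.continuous_on[OF matrix_vector_mul_bounded_linear])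

lemma inj_infinite: "\<forall>s s'. W c s = W c s' \<or> W c s = - W c s' \<longrightarrow> s = s' \<Longrightarrow> infinite (range (W c))"
proof
  assume i: "\<forall>s s'. W c s = W c s' \<or> W c s = - W c s' \<longrightarrow> s = s'" and f: "finite (range (W c))"
  have "inj (W c)" using i unfolding inj_def by blast
  then have "finite (UNIV :: real set)" using finite_imageD[OF f] by blast
  then show False using infinite_UNIV_char_0 by blast
qed

theorem count28:
  fixes f :: "real^3 \<Rightarrow> real" and a :: "real^3"
  assumes pf4: "pf 4 f" and hom: "\<forall>t v. f (t *\<^sub>R v) = t^4 * f v" and a0: "a \<noteq> 0"
  defines "X \<equiv> {v. (a \<bullet> v) * qf v = 0 \<and> v \<bullet> v = 1}"
  shows "finite {v. isoext f X v} \<and> card {v. isoext f X v} \<le> 28"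
proof -
  define C1 where "C1 = {v. a \<bullet> v = 0 \<and> v \<bullet> v = 1}"
  define C2 where "C2 = {v. qf v = 0 \<and> v \<bullet> v = 1}"
  define E where "E = {v. isoext f X v}"
  have XC: "X = C1 \<union> C2" unfolding X_def C1_def C2_def by auto
  have EX: "E \<subseteq> X" unfolding E_def isoext_def locext_def by auto
  have Xsym: "\<forall>v\<in>X. - v \<in> X" unfolding X_def by (auto simp: bf_simps)
  have C1sym: "- v \<in> C1" if "v \<in> C1" for v using that unfolding C1_def by auto
  have C2sym: "- v \<in> C2" if "v \<in> C2" for v using that unfolding C2_def by (auto simp: bf_simps)
  have C1cl: "closed C1" unfolding C1_def
    by (intro closed_Collect_conj closed_Collect_eq continuous_intros)
  have C2cl: "closed C2" unfolding C2_def
    by (intro closed_Collect_conj closed_Collect_eq continuous_intros qf_cont)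
  obtain i where ai: "a \<times> axis i 1 \<noteq> 0" using cross_basis_nonzero[OF a0] by blast
  define w0 where "w0 = unitize (a \<times> axis i 1)"
  have w0: "a \<bullet> w0 = 0" "w0 \<bullet> w0 = 1" unfolding w0_def using unitize_unit[OF ai]
    by (auto simp: unitize_def dot_cross_self)
  have C12fin: "finite (C1 \<inter> C2)"
  proof -
    define c where "c = circ a w0"
    define w' where "w' = unitize (a \<times> w0)"
    note cb = circ_basic[OF a0 w0, folded w'_def c_def]
    note cp = circ_props[OF a0 w0, folded c_def]
    define pq where "pq = [: qf w', 2 * bf w' w0, qf w0 :]"
    have pqv: "poly pq s = qf (cv c s)" for s
      unfolding pq_def cb(6) using qf_lin[of 1 w' s w0] by (simp add: algebra_simps power2_eq_square)
    have cr: "w' \<times> w0 \<noteq> 0"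
    proof -
      have "(a \<times> w0) \<times> w0 = (a \<bullet> w0) *\<^sub>R w0 - (w0 \<bullet> w0) *\<^sub>R a" by (simp add: v3simps)
      then have "(a \<times> w0) \<times> w0 = - a" using w0 by simp
      moreover have "a \<times> w0 \<noteq> 0" using calculation a0 by auto
      ultimately show ?thesis unfolding w'_def unitize_def using a0 by (simp add: cross_mult_left)
    qed
    have pq0: "pq \<noteq> 0"
    proof
      assume "pq = 0"
      then have "qf w' = 0" "bf w' w0 = 0" "qf w0 = 0" unfolding pq_def by auto
      then show False using L2 cr by blast
    qed
    define Z where "Z = {s. poly pq s = 0}"
    have Zf: "finite Z" unfolding Z_def using poly_roots_finite[OF pq0] .
    have "C1 \<inter> C2 \<subseteq> W c ` Z \<union> (\<lambda>s. - W c s) ` Z \<union> {w0, - w0}"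
    proof
      fix v assume v: "v \<in> C1 \<inter> C2"
      then have "v \<in> range (W c) \<union> range (\<lambda>s. - W c s) \<union> {w0, - w0}"
        using cp(4) unfolding C1_def by blast
      moreover have "s \<in> Z" if "v = W c s \<or> v = - W c s" for s
      proof -
        have "qf (W c s) = 0" using that v unfolding C2_def by (auto simp: bf_simps)
        then have "qf (cv c s) = 0" unfolding qf_W using cp(1) by simp
        then show ?thesis unfolding Z_def pqv by simp
      qed
      ultimately show "v \<in> W c ` Z \<union> (\<lambda>s. - W c s) ` Z \<union> {w0, - w0}" by blast
    qed
    moreover have "finite (W c ` Z \<union> (\<lambda>s. - W c s) ` Z \<union> {w0, - w0})" using Zf by simp
    ultimately show ?thesis by (rule finite_subset)
  qed
  have circ_core: "finite (E \<inter> (range (W (circ a w)) \<union> range (\<lambda>s. - W (circ a w) s))) \<and>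
      card (E \<inter> (range (W (circ a w)) \<union> range (\<lambda>s. - W (circ a w) s))) \<le> 8 \<and>
      C1 \<subseteq> range (W (circ a w)) \<union> range (\<lambda>s. - W (circ a w) s) \<union> {w, - w} \<and>
      range (W (circ a w)) \<subseteq> C1 \<and> infinite (range (W (circ a w)))"
    if w: "a \<bullet> w = 0" "w \<bullet> w = 1" for w
  proof -
    note cb = circ_basic[OF a0 w]
    note cp = circ_props[OF a0 w]
    have cov: "C1 \<subseteq> range (W (circ a w)) \<union> range (\<lambda>s. - W (circ a w) s) \<union> {w, - w}"
      using cp(4) unfolding C1_def by blast
    have rC1: "range (W (circ a w)) \<subseteq> C1" using cp(2) unfolding C1_def by auto
    have KC1: "range (W (circ a w)) \<union> range (\<lambda>s. - W (circ a w) s) \<subseteq> C1" using rC1 C1sym by auto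
    have "finite (E \<inter> (range (W (circ a w)) \<union> range (\<lambda>s. - W (circ a w) s))) \<and>
      card (E \<inter> (range (W (circ a w)) \<union> range (\<lambda>s. - W (circ a w) s))) \<le> 2 * (6 * 1 - 2)"
      unfolding E_def
    proof (rule core[OF pf4 hom cb(5) order.refl cp(1) _ Xsym cp(3) C2cl])
      show "\<forall>s. W (circ a w) s \<in> X" using rC1 XC by auto
      show "finite {w, - w}" by simp
      show "X \<subseteq> range (W (circ a w)) \<union> range (\<lambda>s. - W (circ a w) s) \<union> C2 \<union> {w, - w}"
        using XC cov by auto
      show "finite ((range (W (circ a w)) \<union> range (\<lambda>s. - W (circ a w) s)) \<inter> C2)"
        by (rule finite_subset[OF _ C12fin]) (use KC1 in blast)
    qed
    then show ?thesis using cov rC1 inj_infinite[OF cp(3)] by simp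
  qed
  have E1: "finite (E \<inter> C1) \<and> card (E \<inter> C1) \<le> 8"
  proof -
    note cc0 = circ_core[OF w0]
    have "E \<inter> C1 \<subseteq> (E \<inter> (range (W (circ a w0)) \<union> range (\<lambda>s. - W (circ a w0) s))) \<union> {w0, - w0}"
      using cc0 by blast
    then have fin: "finite (E \<inter> C1)" by (rule finite_subset) (use cc0 in auto)
    have "infinite C1" by (rule infinite_super[of "range (W (circ a w0))"]) (use cc0 in auto)
    then have "infinite (C1 - ((E \<inter> C1) \<union> uminus ` (E \<inter> C1)))" using fin by auto
    then obtain w1 where w1: "w1 \<in> C1" "w1 \<notin> E" "w1 \<notin> uminus ` (E \<inter> C1)"
      using infinite_imp_nonempty by blast
    have w1m: "- w1 \<notin> E"
    proof
      assume "- w1 \<in> E"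
      then have "- w1 \<in> E \<inter> C1" using C1sym[OF w1(1)] by blast
      then have "w1 \<in> uminus ` (E \<inter> C1)" by (rule rev_image_eqI) simp
      then show False using w1 by blast
    qed
    have w1p: "a \<bullet> w1 = 0" "w1 \<bullet> w1 = 1" using w1 unfolding C1_def by auto
    note cc1 = circ_core[OF w1p]
    have "E \<inter> C1 \<subseteq> E \<inter> (range (W (circ a w1)) \<union> range (\<lambda>s. - W (circ a w1) s))"
      using cc1 w1(2) w1m by blast
    then have "card (E \<inter> C1) \<le> card (E \<inter> (range (W (circ a w1)) \<union> range (\<lambda>s. - W (circ a w1) s)))"
      by (rule card_mono[rotated]) (use cc1 in blast)
    then have "card (E \<inter> C1) \<le> 8" using cc1 by linarith
    then show ?thesis using fin by simp
  qed
  have E2: "finite (E \<inter> C2) \<and> card (E \<inter> C2) \<le> 20"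
  proof (cases "C2 = {}")
    case True then show ?thesis by simp
  next
    case False
    then obtain v0 where v0: "v0 \<in> C2" by blast
    have q0: "qf v0 = 0" and u0: "v0 \<bullet> v0 = 1" using v0 unfolding C2_def by auto
    have cone_core: "finite (E \<inter> (range (W (cone v0 d0 d1)) \<union> range (\<lambda>s. - W (cone v0 d0 d1) s))) \<and>
      card (E \<inter> (range (W (cone v0 d0 d1)) \<union> range (\<lambda>s. - W (cone v0 d0 d1) s))) \<le> 20 \<and>
      C2 \<subseteq> range (W (cone v0 d0 d1)) \<union> range (\<lambda>s. - W (cone v0 d0 d1) s) \<union> {unitize (vv v0 d1), - unitize (vv v0 d1)} \<and>
      infinite (range (W (cone v0 d0 d1))) \<and> range (W (cone v0 d0 d1)) \<subseteq> C2"
      if T: "trip v0 d0 d1 \<noteq> 0" for d0 d1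
    proof -
      note cp = cone_props[OF q0 u0 T]
      have cov: "C2 \<subseteq> range (W (cone v0 d0 d1)) \<union> range (\<lambda>s. - W (cone v0 d0 d1) s) \<union> {unitize (vv v0 d1), - unitize (vv v0 d1)}"
        using cp(4) unfolding C2_def by blast
      have rC2: "range (W (cone v0 d0 d1)) \<subseteq> C2" using cp(2) unfolding C2_def by auto
      have KC2: "range (W (cone v0 d0 d1)) \<union> range (\<lambda>s. - W (cone v0 d0 d1) s) \<subseteq> C2" using rC2 C2sym by auto
      have "finite (E \<inter> (range (W (cone v0 d0 d1)) \<union> range (\<lambda>s. - W (cone v0 d0 d1) s))) \<and>
        card (E \<inter> (range (W (cone v0 d0 d1)) \<union> range (\<lambda>s. - W (cone v0 d0 d1) s))) \<le> 2 * (6 * 2 - 2)"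
        unfolding E_def
      proof (rule core[OF pf4 hom cone_deg _ cp(1) _ Xsym cp(3) C1cl])
        show "1 \<le> (2::nat)" by simp
        show "\<forall>s. W (cone v0 d0 d1) s \<in> X" using rC2 XC by auto
        show "finite {unitize (vv v0 d1), - unitize (vv v0 d1)}" by simp
        show "X \<subseteq> range (W (cone v0 d0 d1)) \<union> range (\<lambda>s. - W (cone v0 d0 d1) s) \<union> C1 \<union> {unitize (vv v0 d1), - unitize (vv v0 d1)}"
          using XC cov by auto
        show "finite ((range (W (cone v0 d0 d1)) \<union> range (\<lambda>s. - W (cone v0 d0 d1) s)) \<inter> C1)"
          by (rule finite_subset[OF _ C12fin]) (use KC2 in blast)
      qed
      then show ?thesis using cov rC2 inj_infinite[OF cp(3)] by simp
    qed
    have v0n: "v0 \<noteq> 0" using u0 by auto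
    obtain j where vj: "v0 \<times> axis j 1 \<noteq> 0" using cross_basis_nonzero[OF v0n] by blast
    have T0: "trip v0 (v0 \<times> axis j 1) (axis j 1) \<noteq> 0" unfolding trip_cross_self using vj by simp
    note cc0 = cone_core[OF T0]
    have "E \<inter> C2 \<subseteq> (E \<inter> (range (W (cone v0 (v0 \<times> axis j 1) (axis j 1))) \<union> range (\<lambda>s. - W (cone v0 (v0 \<times> axis j 1) (axis j 1)) s)))
       \<union> {unitize (vv v0 (axis j 1)), - unitize (vv v0 (axis j 1))}"
      using cc0 by blast
    then have fin: "finite (E \<inter> C2)" by (rule finite_subset) (use cc0 in auto)
    have "infinite C2" by (rule infinite_super[of "range (W (cone v0 (v0 \<times> axis j 1) (axis j 1)))"]) (use cc0 in auto)
    then have "infinite (C2 - ((E \<inter> C2) \<union> uminus ` (E \<inter> C2) \<union> {v0, - v0}))" using fin by auto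
    then obtain x1 where x1: "x1 \<in> C2" "x1 \<notin> E" "x1 \<notin> uminus ` (E \<inter> C2)" "x1 \<noteq> v0" "x1 \<noteq> - v0"
      using infinite_imp_nonempty by blast
    have x1m: "- x1 \<notin> E"
    proof
      assume "- x1 \<in> E"
      then have "- x1 \<in> E \<inter> C2" using C2sym[OF x1(1)] by blast
      then have "x1 \<in> uminus ` (E \<inter> C2)" by (rule rev_image_eqI) simp
      then show False using x1 by blast
    qed
    have qx1: "qf x1 = 0" and ux1: "x1 \<bullet> x1 = 1" using x1 unfolding C2_def by auto
    have vx: "v0 \<times> x1 \<noteq> 0"
    proof
      assume "v0 \<times> x1 = 0"
      then have "v0 = x1 \<or> v0 = - x1" using L3[OF u0 ux1] by blast
      then show False using x1(4,5) by auto
    qed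
    have T1: "trip v0 (v0 \<times> x1) x1 \<noteq> 0" unfolding trip_cross_self using vx by simp
    note cc1 = cone_core[OF T1]
    have vvx: "vv v0 x1 = (- (2 * bf v0 x1)) *\<^sub>R x1" unfolding vv_def using qx1 by simp
    have vvnz: "vv v0 x1 \<noteq> 0" using vv_nz[OF vx q0] .
    then have bnz: "bf v0 x1 \<noteq> 0" using vvx by auto
    have "x1 = (1 / (- (2 * bf v0 x1))) *\<^sub>R vv v0 x1" using vvx bnz by simp
    from L4[OF ux1 this] have "x1 = unitize (vv v0 x1) \<or> x1 = - unitize (vv v0 x1)" .
    then have "unitize (vv v0 x1) \<notin> E \<and> - unitize (vv v0 x1) \<notin> E" using x1(2) x1m by (metis minus_minus)
    then have "E \<inter> C2 \<subseteq> E \<inter> (range (W (cone v0 (v0 \<times> x1) x1)) \<union> range (\<lambda>s. - W (cone v0 (v0 \<times> x1) x1) s))"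
      using cc1 by blast
    then have "card (E \<inter> C2) \<le> card (E \<inter> (range (W (cone v0 (v0 \<times> x1) x1)) \<union> range (\<lambda>s. - W (cone v0 (v0 \<times> x1) x1) s)))"
      by (rule card_mono[rotated]) (use cc1 in blast)
    then have "card (E \<inter> C2) \<le> 20" using cc1 by linarith
    then show ?thesis using fin by simp
  qed
  have "E = (E \<inter> C1) \<union> (E \<inter> C2)" using EX XC by auto
  moreover have "card ((E \<inter> C1) \<union> (E \<inter> C2)) \<le> card (E \<inter> C1) + card (E \<inter> C2)" by (rule card_Un_le)
  ultimately have "finite E \<and> card E \<le> 28" using E1 E2
  proof -
    assume e: "E = E \<inter> C1 \<union> E \<inter> C2" and c: "card (E \<inter> C1 \<union> E \<inter> C2) \<le> card (E \<inter> C1) + card (E \<inter> C2)"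
    have "finite E" using e E1 E2 by (metis finite_Un)
    moreover have "card E \<le> 28" using arg_cong[OF e, of card] c E1 E2 by linarith
    ultimately show ?thesis by simp
  qed
  then show ?thesis unfolding E_def .
qed

end


lemma trip_swap12: "trip x y z = - trip y x z"
  unfolding trip_def by (simp add: v3simps)
lemma trip_swap13: "trip x y z = - trip z y x"
  unfolding trip_def by (simp add: v3simps)

lemma g1_sym12:
  assumes "trip p1 p2 p3 \<noteq> 0"
  shows "cyl_g1 p2 p1 p3 v = cyl_g1 p1 p2 p3 v"
proof -
  have d1: "det (cyl_M p1 p2 p3) \<noteq> 0" using assms det_M_trip by simp
  have d2: "det (cyl_M p2 p1 p3) \<noteq> 0" using assms det_M_trip trip_swap12[of p2 p1 p3] by simp
  show ?thesis unfolding g1_formula[OF d1] g1_formula[OF d2]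
    using trip_swap12[of p2 p1 p3] trip_swap12[of v p1 p3] trip_swap12[of p2 v p3] trip_swap12[of p2 p1 v] assms
    by (simp add: field_simps)
qed

lemma g1_sym13:
  assumes "trip p1 p2 p3 \<noteq> 0"
  shows "cyl_g1 p3 p2 p1 v = cyl_g1 p1 p2 p3 v"
proof -
  have d1: "det (cyl_M p1 p2 p3) \<noteq> 0" using assms det_M_trip by simp
  have d2: "det (cyl_M p3 p2 p1) \<noteq> 0" using assms det_M_trip trip_swap13[of p3 p2 p1] by simp
  have t1: "trip v p2 p1 = - trip p1 p2 v" using trip_swap13[of v p2 p1] .
  have t2: "trip p3 v p1 = - trip p1 v p3" using trip_swap13[of p3 v p1] .
  have t3: "trip p3 p2 v = - trip v p2 p3" using trip_swap13[of p3 p2 v] .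
  show ?thesis unfolding g1_formula[OF d1] g1_formula[OF d2]
    using trip_swap13[of p3 p2 p1] t1 t2 t3 assms
    by (simp add: field_simps)
qed

lemma perp2: "\<exists>k::real^3. k \<noteq> 0 \<and> al \<bullet> k = 0 \<and> be \<bullet> k = 0"
proof (cases "al \<times> be = 0")
  case False
  then show ?thesis by (intro exI[of _ "al \<times> be"]) (simp add: dot_cross_self)
next
  case True
  show ?thesis
  proof (cases "al = 0")
    case False
    obtain i where i: "al \<times> axis i 1 \<noteq> 0" using cross_basis_nonzero[OF False] by blast
    have "al \<times> (be \<times> al) = (al \<bullet> al) *\<^sub>R be - (al \<bullet> be) *\<^sub>R al" by (simp add: v3simps)
    moreover have "be \<times> al = 0" using True by (metis cross_skew neg_equal_0_iff_equal)
    ultimately have "(al \<bullet> al) *\<^sub>R be = (al \<bullet> be) *\<^sub>R al" by simp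
    then have "be = (1 / (al \<bullet> al)) *\<^sub>R ((al \<bullet> be) *\<^sub>R al)" using False by (intro scale_solve) auto
    then obtain cc where "be = cc *\<^sub>R al" by (metis scaleR_scaleR)
    then have "be \<bullet> (al \<times> axis i 1) = 0" by (simp add: dot_cross_self)
    then show ?thesis using i by (intro exI[of _ "al \<times> axis i 1"]) (simp add: dot_cross_self)
  next
    case True
    show ?thesis
    proof (cases "be = 0")
      case True
      then show ?thesis using \<open>al = 0\<close> by (intro exI[of _ "axis 1 1"]) (simp add: axis_eq_0_iff)
    next
      case False
      obtain i where i: "be \<times> axis i 1 \<noteq> 0" using cross_basis_nonzero[OF False] by blast
      then show ?thesis using \<open>al = 0\<close> by (intro exI[of _ "be \<times> axis i 1"]) (simp add: dot_cross_self)
    qed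
  qed
qed

lemma irr:
  assumes ST: "transpose S = S" and nd: "\<forall>k. S *v k = 0 \<longrightarrow> k = 0"
  shows "irreducible_quadratic_form (\<lambda>v. v \<bullet> (S *v v))"
proof -
  interpret qform S using ST nd by unfold_locales
  have qf_eq: "(\<lambda>v. v \<bullet> (S *v v)) = qf" unfolding bf_def ..
  have np: False if prod: "\<forall>v. qf v = (al \<bullet> v) * (be \<bullet> v)" for al be
  proof -
    obtain k where k: "k \<noteq> 0" "al \<bullet> k = 0" "be \<bullet> k = 0" using perp2 by blast
    have "bf k v = 0" for v
    proof -
      have "qf (1 *\<^sub>R k + 1 *\<^sub>R v) = qf k + 2 * bf k v + qf v" using qf_lin[of 1 k 1 v] by simp
      moreover have "qf (1 *\<^sub>R k + 1 *\<^sub>R v) = qf v" using prod k by (simp add: inner_add_right)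
      moreover have "qf k = 0" using prod k by simp
      ultimately show ?thesis by simp
    qed
    then have "k = 0" using bf_zero_all by blast
    then show False using k by simp
  qed
  show ?thesis unfolding irreducible_quadratic_form_def quadratic_form_def qf_eq
  proof (intro conjI)
    show "\<exists>A. \<forall>v. qf v = v \<bullet> (A *v v)" unfolding bf_def by blast
    show "\<exists>v. qf v \<noteq> 0" using np[of 0 0] by auto
    show "\<not> (\<exists>a b. \<forall>v. qf v = (a \<bullet> v) * (b \<bullet> v))" using np by blast
  qed
qed

lemma pairs:
  fixes F :: "nat \<Rightarrow> real"
  assumes "\<exists>a b c d. {a, b, c, d} = {0, 1, 2, 3 :: nat} \<and> card {a, b, c, d} = 4 \<and>
                 F a = F b \<and> F c = F d \<and> F a \<noteq> F c"
  shows "(F 0 = F 1 \<and> F 2 = F 3 \<and> F 0 \<noteq> F 2) \<or> (F 0 = F 2 \<and> F 1 = F 3 \<and> F 0 \<noteq> F 1) \<or>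
         (F 0 = F 3 \<and> F 1 = F 2 \<and> F 0 \<noteq> F 1)"
proof -
  obtain a b c d where s: "{a, b, c, d} = {0, 1, 2, 3 :: nat}" and cd: "card {a, b, c, d} = 4"
    and e: "F a = F b" "F c = F d" "F a \<noteq> F c" using assms by blast
  have "distinct [a, b, c, d]" using cd by (intro card_distinct) simp
  then have dd: "a \<noteq> b" "a \<noteq> c" "a \<noteq> d" "b \<noteq> c" "b \<noteq> d" "c \<noteq> d" by auto
  have "a \<in> {0,1,2,3}" "b \<in> {0,1,2,3}" "c \<in> {0,1,2,3}" "d \<in> {0,1,2,3}" using s by blast+
  then have ra: "a = 0 \<or> a = 1 \<or> a = 2 \<or> a = 3" and rb: "b = 0 \<or> b = 1 \<or> b = 2 \<or> b = 3"
    and rc: "c = 0 \<or> c = 1 \<or> c = 2 \<or> c = 3" and rd: "d = 0 \<or> d = 1 \<or> d = 2 \<or> d = 3" by auto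
  show ?thesis using ra rb rc rd dd e by (elim disjE) simp_all
qed

lemma tri_norm:
  "norm ((p1 - p2) \<times> (p3 - p2)) = norm ((p2 - p1) \<times> (p3 - p1))"
  "norm ((p2 - p3) \<times> (p1 - p3)) = norm ((p2 - p1) \<times> (p3 - p1))"
proof -
  have "(p1 - p2) \<times> (p3 - p2) = - ((p2 - p1) \<times> (p3 - p1))" by (simp add: v3simps)
  then show "norm ((p1 - p2) \<times> (p3 - p2)) = norm ((p2 - p1) \<times> (p3 - p1))" by (metis norm_minus_cancel)
  have "(p2 - p3) \<times> (p1 - p3) = - ((p2 - p1) \<times> (p3 - p1))" by (simp add: v3simps)
  then show "norm ((p2 - p3) \<times> (p1 - p3)) = norm ((p2 - p1) \<times> (p3 - p1))" by (metis norm_minus_cancel)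
qed

lemma norm_cross_swap: "norm (x \<times> y) = norm (y \<times> x)"
  by (metis cross_skew norm_minus_cancel)

lemma get_aS:
  fixes p1 p2 p3 :: "real^3"
  assumes D: "trip p1 p2 p3 \<noteq> 0"
    and areas: "\<exists>a b c d. {a, b, c, d} = {0, 1, 2, 3 :: nat} \<and> card {a, b, c, d} = 4 \<and>
                 facet_area p1 p2 p3 a = facet_area p1 p2 p3 b \<and>
                 facet_area p1 p2 p3 c = facet_area p1 p2 p3 d \<and>
                 facet_area p1 p2 p3 a \<noteq> facet_area p1 p2 p3 c"
  shows "\<exists>a S. a \<noteq> 0 \<and> transpose S = S \<and> (\<forall>k. S *v k = 0 \<longrightarrow> k = 0) \<and>
           (\<forall>v. cyl_g1 p1 p2 p3 v = (a \<bullet> v) * (v \<bullet> (S *v v)))"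
proof -
  let ?F = "facet_area p1 p2 p3"
  have F: "?F 0 = norm ((p2 - p1) \<times> (p3 - p1)) / 2" "?F 1 = norm (p2 \<times> p3) / 2"
    "?F 2 = norm (p1 \<times> p3) / 2" "?F 3 = norm (p1 \<times> p2) / 2"
    unfolding facet_area_def by simp_all
  from pairs[OF areas] show ?thesis
  proof (elim disjE conjE)
    assume h: "?F 0 = ?F 1" "?F 2 = ?F 3" "?F 0 \<noteq> ?F 2"
    have h1: "norm ((p2 - p1) \<times> (p3 - p1)) = norm (p2 \<times> p3)" using h F by simp
    have h2: "norm (p1 \<times> p3) = norm (p1 \<times> p2)" using h F by simp
    have ne: "norm (p1 \<times> p3) \<noteq> norm (p2 \<times> p3)" using h F by simp
    note r = rel_from_areas[OF D h1 h2]
    show ?thesis by (rule exists_aS[OF D r ne])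
  next
    assume h: "?F 0 = ?F 2" "?F 1 = ?F 3" "?F 0 \<noteq> ?F 1"
    have D': "trip p2 p1 p3 \<noteq> 0" using D trip_swap12[of p2 p1 p3] by simp
    have h1: "norm ((p1 - p2) \<times> (p3 - p2)) = norm (p1 \<times> p3)" using h F tri_norm(1)[of p1 p2 p3] by simp
    have h2: "norm (p2 \<times> p3) = norm (p2 \<times> p1)" using h F norm_cross_swap[of p2 p1] by simp
    have ne: "norm (p2 \<times> p3) \<noteq> norm (p1 \<times> p3)" using h F by simp
    note r = rel_from_areas[OF D' h1 h2]
    from exists_aS[OF D' r ne] show ?thesis using g1_sym12[OF D] by simp
  next
    assume h: "?F 0 = ?F 3" "?F 1 = ?F 2" "?F 0 \<noteq> ?F 1"
    have D': "trip p3 p2 p1 \<noteq> 0" using D trip_swap13[of p3 p2 p1] by simp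
    have h1: "norm ((p2 - p3) \<times> (p1 - p3)) = norm (p2 \<times> p1)" using h F tri_norm(2)[of p2 p3 p1] norm_cross_swap[of p2 p1]
      by (simp add: tri_norm(2))
    have h2: "norm (p3 \<times> p1) = norm (p3 \<times> p2)" using h F norm_cross_swap[of p3 p1] norm_cross_swap[of p3 p2] by simp
    have ne: "norm (p3 \<times> p1) \<noteq> norm (p2 \<times> p1)" using h F norm_cross_swap[of p3 p1] norm_cross_swap[of p2 p1] by simp
    note r = rel_from_areas[OF D' h1 h2]
    from exists_aS[OF D' r ne] show ?thesis using g1_sym13[OF D] by simp
  qed
qed

theorem mainTheorem3:
  fixes p1 p2 p3 :: "real^3"
  assumes simplex: "det (cyl_M p1 p2 p3) \<noteq> 0"
    and areas: "\<exists>a b c d. {a, b, c, d} = {0, 1, 2, 3 :: nat} \<and> card {a, b, c, d} = 4 \<and>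
                 facet_area p1 p2 p3 a = facet_area p1 p2 p3 b \<and>
                 facet_area p1 p2 p3 c = facet_area p1 p2 p3 d \<and>
                 facet_area p1 p2 p3 a \<noteq> facet_area p1 p2 p3 c"
  shows "finite {v. cyl_isolated_local_extremum p1 p2 p3 v}
         \<and> card {v. cyl_isolated_local_extremum p1 p2 p3 v} \<le> 28
         \<and> (\<exists>l q. linear_form l \<and> irreducible_quadratic_form q \<and>
                  (\<forall>v. cyl_g1 p1 p2 p3 v = l v * q v))"
proof -
  have D: "trip p1 p2 p3 \<noteq> 0" using simplex det_M_trip by simp
  obtain a S where a0: "a \<noteq> 0" and ST: "transpose S = S" and nd: "\<forall>k. S *v k = 0 \<longrightarrow> k = 0"
    and g: "\<forall>v. cyl_g1 p1 p2 p3 v = (a \<bullet> v) * (v \<bullet> (S *v v))"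
    using get_aS[OF D areas] by blast
  interpret qform S using ST nd by unfold_locales
  have dirs: "cyl_dirs p1 p2 p3 = {v. (a \<bullet> v) * qf v = 0 \<and> v \<bullet> v = 1}"
    unfolding cyl_dirs_def cyl_g2_def bf_def using g by auto
  have iso: "{v. cyl_isolated_local_extremum p1 p2 p3 v} = {v. isoext (cyl_f p1 p2 p3) (cyl_dirs p1 p2 p3) v}"
    unfolding cyl_isolated_local_extremum_def isoext_def cyl_local_extremum_def locext_def by simp
  have hom: "\<forall>t v. cyl_f p1 p2 p3 (t *\<^sub>R v) = t^4 * cyl_f p1 p2 p3 v" using f_hom[OF simplex] by blast
  have c: "finite {v. cyl_isolated_local_extremum p1 p2 p3 v} \<and> card {v. cyl_isolated_local_extremum p1 p2 p3 v} \<le> 28"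
    unfolding iso dirs by (rule count28[OF pf_f[OF simplex] hom a0])
  have lf: "linear_form (\<lambda>v. a \<bullet> v)" unfolding linear_form_def using a0 by blast
  show ?thesis using c lf irr[OF ST nd] g by blast
qed


end
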